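(* Let $k\ge 2$ be an even integer, and let $S_k$ (a set of $2k+1$ points) and $\mathcal D$ (a set of $k$ directions) be as defined in the context. Then the unique minimum-length $\mathcal D$-monotone geometric spanning tree of $S_k$ is the star $T^\star$ with center $o$ and edges $ov_0,\dots,ov_{2k-1}$; in particular its maximum degree is $\deg_{T^\star}(o)=2k$.
   Context: Let $k\ge 2$ be even. Let $\mathcal D=\{d_1,\dots,d_k\}$ where $d_i=(\cos((i-1)\pi/k),\sin((i-1)\pi/k))$, so consecutive directions differ by angle $\pi/k$. The lines through the origin $o$ orthogonal to the $d_i$ partition the plane into $2k$ wedges $W_0,\dots,W_{2k-1}$, where (since $k$ is even) $W_i$ is the wedge of polar angles in $[i\pi/k,(i+1)\pi/k]$. Let $S_k=\{o\}\cup\{v_0,\dots,v_{2k-1}\}$, where $v_i$ is the point on the unit circle at polar angle $i\pi/k+\frac{2\pi}{3k}$ (the second angle-trisector of $W_i$ in counterclockwise order); thus $v_0,\dots,v_{2k-1}$ form a regular $2k$-gon centered at $o$, and these are called polygon vertices. A geometric path $\langle p_1,\dots,p_r\rangle$ is $d$-monotone if no two of its vertices lie on a common line orthogonal to $d$ and $\langle p_1,d\rangle,\dots,\langle p_r,d\rangle$ is strictly increasing or strictly decreasing. A geometric spanning tree of $S$ is a tree with vertex set $S$ whose edges are straight segments; its length is the sum of Euclidean edge lengths; it is $\mathcal D$-monotone if for every pair of vertices $u,v$ there is $d\in\mathcal D$ with the tree path from $u$ to $v$ $d$-monotone. *)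

theory Defs
  imports "HOL-Analysis.Analysis"
begin

type_synonym pt = "real \<times> real"

definition dirs :: "nat \<Rightarrow> pt set" where
  "dirs k = {(cos (real (i - 1) * pi / real k), sin (real (i - 1) * pi / real k)) | i. i \<in> {1..k}}"

definition polyv :: "nat \<Rightarrow> nat \<Rightarrow> pt" where
  "polyv k i = (cos (real i * pi / real k + 2 * pi / (3 * real k)),
                sin (real i * pi / real k + 2 * pi / (3 * real k)))"

definition Sk :: "nat \<Rightarrow> pt set" where
  "Sk k = insert (0,0) (polyv k ` {..<2*k})"

definition is_graph :: "pt set \<Rightarrow> pt set set \<Rightarrow> bool" where
  "is_graph S E \<longleftrightarrow> (\<forall>e\<in>E. \<exists>a b. e = {a, b} \<and> a \<in> S \<and> b \<in> S \<and> a \<noteq> b)"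

definition is_path :: "pt set \<Rightarrow> pt set set \<Rightarrow> pt list \<Rightarrow> pt \<Rightarrow> pt \<Rightarrow> bool" where
  "is_path S E ps u v \<longleftrightarrow> ps \<noteq> [] \<and> hd ps = u \<and> last ps = v \<and> distinct ps \<and> set ps \<subseteq> S \<and>
     (\<forall>i. Suc i < length ps \<longrightarrow> {ps ! i, ps ! Suc i} \<in> E)"

definition is_cycle :: "pt set \<Rightarrow> pt set set \<Rightarrow> pt list \<Rightarrow> bool" where
  "is_cycle S E cs \<longleftrightarrow> length cs \<ge> 3 \<and> distinct cs \<and> set cs \<subseteq> S \<and>
     (\<forall>i. Suc i < length cs \<longrightarrow> {cs ! i, cs ! Suc i} \<in> E) \<and> {last cs, hd cs} \<in> E"

definition spanning_tree :: "pt set \<Rightarrow> pt set set \<Rightarrow> bool" where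
  "spanning_tree S E \<longleftrightarrow> is_graph S E \<and>
     (\<forall>u\<in>S. \<forall>v\<in>S. \<exists>ps. is_path S E ps u v) \<and> (\<nexists>cs. is_cycle S E cs)"

definition monotone_path :: "pt \<Rightarrow> pt list \<Rightarrow> bool" where
  "monotone_path d ps \<longleftrightarrow>
     sorted_wrt (<) (map (\<lambda>p. inner p d) ps) \<or> sorted_wrt (>) (map (\<lambda>p. inner p d) ps)"

definition Dmonotone :: "pt set \<Rightarrow> pt set \<Rightarrow> pt set set \<Rightarrow> bool" where
  "Dmonotone D S E \<longleftrightarrow> (\<forall>u\<in>S. \<forall>v\<in>S. \<exists>d\<in>D. \<forall>ps. is_path S E ps u v \<longrightarrow> monotone_path d ps)"

definition tree_length :: "pt set set \<Rightarrow> real" where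
  "tree_length E = (\<Sum>e\<in>E. diameter e)"

definition star :: "nat \<Rightarrow> pt set set" where
  "star k = {{(0,0), polyv k i} | i. i < 2*k}"

definition degree :: "pt set set \<Rightarrow> pt \<Rightarrow> nat" where
  "degree E x = card {e\<in>E. x \<in> e}"

end

theory Submission
  imports Defs
begin


definition cc :: "nat \<Rightarrow> int \<Rightarrow> real" where
  "cc k a = cos (real_of_int a * pi / (3 * real k))"

definition prj :: "nat \<Rightarrow> int \<Rightarrow> int \<Rightarrow> real" where
  "prj k m x = cc k (3*x + 2 - 3*m)"

lemma cc_period: assumes "k > 0" shows "cc k (a + 6 * int k * q) = cc k a"
proof -
  have "real_of_int (a + 6 * int k * q) * pi / (3 * real k) = real_of_int a * pi / (3 * real k) + (2*pi) * real_of_int q"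
    using assms by (simp add: field_simps)
  then show ?thesis unfolding cc_def by (simp add: cos_add)
qed

lemma cc_flip: assumes "k > 0" shows "cc k (a + 3 * int k) = - cc k a"
proof -
  have "real_of_int (a + 3 * int k) * pi / (3 * real k) = real_of_int a * pi / (3 * real k) + pi"
    using assms by (simp add: field_simps)
  then show ?thesis unfolding cc_def by simp
qed

lemma cc_abs: "cc k (abs a) = cc k a"
  unfolding cc_def by (cases "a \<ge> 0") (auto simp: minus_divide_left[symmetric])

lemma cc_less: assumes "k > 0" "abs a \<le> 3 * int k" "abs b \<le> 3 * int k"
  shows "cc k a < cc k b \<longleftrightarrow> abs b < abs a"
proof -
  have r: "real_of_int (abs c) * pi / (3 * real k) \<le> pi" if "abs c \<le> 3 * int k" for c
  proof -
    have "real_of_int (abs c) \<le> 3 * real k" using that by linarith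
    then have "real_of_int (abs c) * pi \<le> 3 * real k * pi" by (simp add: mult_right_mono)
    then show ?thesis using assms by (simp add: divide_le_eq)
  qed
  have z: "0 \<le> real_of_int (abs c) * pi / (3 * real k)" for c by simp
  have mono: "real_of_int (abs c) * pi / (3 * real k) < real_of_int (abs d) * pi / (3 * real k) \<longleftrightarrow> abs c < abs d" for c d
    using assms by (simp add: divide_less_cancel flip: of_int_abs)
  show ?thesis
  proof
    assume "cc k a < cc k b"
    then have "cc k (abs a) < cc k (abs b)" by (simp add: cc_abs)
    then show "abs b < abs a"
      unfolding cc_def using cos_monotone_0_pi_le[OF z _ r[OF assms(2)]] mono
      by (metis assms(3) cos_monotone_0_pi_le linorder_not_le r z) 
  next
    assume "abs b < abs a"
    then have "cc k (abs a) < cc k (abs b)"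
      unfolding cc_def using cos_monotone_0_pi[OF z _ r[OF assms(2)]] mono by blast
    then show "cc k a < cc k b" by (simp add: cc_abs)
  qed
qed

lemma cos_pos_iff: assumes "0 \<le> x" "x \<le> pi" shows "0 < cos x \<longleftrightarrow> x < pi/2"
proof
  assume "0 < cos x"
  show "x < pi/2"
  proof (rule ccontr)
    assume "\<not> x < pi/2"
    then have "cos x \<le> cos (pi/2)" using assms cos_monotone_0_pi_le[of "pi/2" x] by auto
    then show False using \<open>0 < cos x\<close> by simp
  qed
next
  assume "x < pi/2" then show "0 < cos x" using assms by (intro cos_gt_zero_pi) auto
qed

lemma cos_neg_iff: assumes "0 \<le> x" "x \<le> pi" shows "cos x < 0 \<longleftrightarrow> pi/2 < x"
proof
  assume "cos x < 0"
  show "pi/2 < x"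
  proof (rule ccontr)
    assume "\<not> pi/2 < x"
    then have "0 \<le> cos x" using assms by (intro cos_ge_zero) auto
    then show False using \<open>cos x < 0\<close> by simp
  qed
next
  assume "pi/2 < x" then have "cos x < cos (pi/2)" using assms by (intro cos_monotone_0_pi) auto
  then show "cos x < 0" by simp
qed

lemma cc_arg: assumes "k > 0" "abs a \<le> 3 * int k"
  shows "0 \<le> real_of_int (abs a) * pi / (3 * real k)" "real_of_int (abs a) * pi / (3 * real k) \<le> pi"
    and "real_of_int (abs a) * pi / (3 * real k) < pi/2 \<longleftrightarrow> 2 * abs a < 3 * int k"
    and "pi/2 < real_of_int (abs a) * pi / (3 * real k) \<longleftrightarrow> 3 * int k < 2 * abs a"
proof -
  have kp: "0 < 3 * real k" using assms by simp
  show "0 \<le> real_of_int (abs a) * pi / (3 * real k)" by simp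
  have "real_of_int (abs a) \<le> 3 * real k" using assms by linarith
  then have "real_of_int (abs a) * pi \<le> 3 * real k * pi" by (simp add: mult_right_mono)
  then show "real_of_int (abs a) * pi / (3 * real k) \<le> pi" using kp by (simp add: divide_le_eq)
  have "real_of_int (abs a) * pi / (3 * real k) < pi/2 \<longleftrightarrow> real_of_int (abs a) * pi * 2 < pi * (3 * real k)"
    using kp by (simp add: divide_less_eq field_simps)
  also have "\<dots> \<longleftrightarrow> real_of_int (2 * abs a) * pi < real_of_int (3 * int k) * pi" by (simp add: algebra_simps)
  also have "\<dots> \<longleftrightarrow> 2 * abs a < 3 * int k" by (metis mult_less_cancel_right_pos pi_gt_zero of_int_less_iff)
  finally show "real_of_int (abs a) * pi / (3 * real k) < pi/2 \<longleftrightarrow> 2 * abs a < 3 * int k" .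
  have "pi/2 < real_of_int (abs a) * pi / (3 * real k) \<longleftrightarrow> pi * (3 * real k) < real_of_int (abs a) * pi * 2"
    using kp by (simp add: less_divide_eq field_simps)
  also have "\<dots> \<longleftrightarrow> real_of_int (3 * int k) * pi < real_of_int (2 * abs a) * pi" by (simp add: algebra_simps)
  also have "\<dots> \<longleftrightarrow> 3 * int k < 2 * abs a" by (metis mult_less_cancel_right_pos pi_gt_zero of_int_less_iff)
  finally show "pi/2 < real_of_int (abs a) * pi / (3 * real k) \<longleftrightarrow> 3 * int k < 2 * abs a" .
qed

lemma cc_pos: assumes "k > 0" "abs a \<le> 3 * int k" shows "0 < cc k a \<longleftrightarrow> 2 * abs a < 3 * int k"
  using cos_pos_iff[OF cc_arg(1,2)[OF assms]] cc_arg(3)[OF assms] cc_abs[of k a]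
  by (simp add: cc_def)

lemma cc_neg: assumes "k > 0" "abs a \<le> 3 * int k" shows "cc k a < 0 \<longleftrightarrow> 3 * int k < 2 * abs a"
  using cos_neg_iff[OF cc_arg(1,2)[OF assms]] cc_arg(4)[OF assms] cc_abs[of k a]
  by (simp add: cc_def)

lemma prj_norm: assumes "k > 0"
  shows "\<exists>t s. L \<le> t \<and> t < L + int k \<and> (s = 1 \<or> s = -1) \<and> (\<forall>x. prj k m x = s * cc k (3*(x - c) + 3*t + 2))"
proof -
  define r where "r = (c - m - L) mod (2 * int k)"
  define q where "q = (c - m - L) div (2 * int k)"
  have r: "0 \<le> r" "r < 2 * int k" using assms by (auto simp: r_def)
  have cm: "c - m = L + r + 2 * int k * q" unfolding r_def q_def by simp
  show ?thesis
  proof (cases "r < int k")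
    case True
    show ?thesis
    proof (intro exI conjI allI)
      show "L \<le> L + r" "L + r < L + int k" using r True by auto
      show "(1::real) = 1 \<or> (1::real) = -1" by simp
      fix x
      have "3*x + 2 - 3*m = (3*(x - c) + 3*(L+r) + 2) + 6 * int k * q" using cm by (simp add: algebra_simps)
      then show "prj k m x = 1 * cc k (3*(x - c) + 3*(L+r) + 2)"
        unfolding prj_def using cc_period[OF assms] by (metis mult_1)
    qed
  next
    case False
    show ?thesis
    proof (intro exI conjI allI)
      show "L \<le> L + r - int k" "L + r - int k < L + int k" using r False by auto
      show "(-1::real) = 1 \<or> (-1::real) = -1" by simp
      fix x
      have "3*x + 2 - 3*m = ((3*(x - c) + 3*(L+r - int k) + 2) + 3 * int k) + 6 * int k * q" using cm by (simp add: algebra_simps)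
      then show "prj k m x = -1 * cc k (3*(x - c) + 3*(L+r - int k) + 2)"
        unfolding prj_def using cc_period[OF assms] cc_flip[OF assms] by (metis mult_minus1)
    qed
  qed
qed

lemma cv_less: "abs (3*a+2) < abs (3*b+2) \<longleftrightarrow> (a < b \<and> -1 \<le> a+b) \<or> (b < a \<and> a+b \<le> -2)" for a b :: int
  by smt
lemma cv_pos: "int k = 2*h \<Longrightarrow> 2*abs (3*a+2) < 3*int k \<longleftrightarrow> -h \<le> a \<and> a \<le> h - 1" for a h :: int
  by smt
lemma cv_neg: "int k = 2*h \<Longrightarrow> 3*int k < 2*abs (3*a+2) \<longleftrightarrow> a \<le> -h-1 \<or> h \<le> a" for a h :: int
  by smt



lemma cfg_CA:
  fixes c m :: int and j :: int
  assumes k: "k > 0" and hk: "int k = 2*h"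
    and a0: "int k - 1 \<le> j"
    and a1: "j \<le> int k"
    and d_y: "y = c + (j)"
    and d_z: "z = c + (0)"
  shows "\<not> (prj k m y < prj k m z \<and> prj k m z < 0)"
proof
  assume H: "prj k m y < prj k m z \<and> prj k m z < 0"
  obtain t s where t1: "- int k \<le> t" and t2: "t < - int k + int k" and s: "s = 1 \<or> s = -1"
     and P: "\<And>x. prj k m x = s * cc k (3*(x - c) + 3*t + 2)"
    using prj_norm[OF k, of "- int k" m c] by blast
  have r_y: "abs (3*((j) + t) + 2) \<le> 3 * int k" using t1 t2 hk a0 a1 by smt
  have p_y: "prj k m y = s * cc k (3*((j) + t) + 2)" using P[of y] unfolding d_y by (simp add: algebra_simps)
  have r_z: "abs (3*((0) + t) + 2) \<le> 3 * int k" using t1 t2 hk a0 a1 by smt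
  have p_z: "prj k m z = s * cc k (3*((0) + t) + 2)" using P[of z] unfolding d_z by (simp add: algebra_simps)
  have h0: "prj k m y < prj k m z" using H by blast
  have h1: "prj k m z < 0" using H by blast
  have f1: False if sv: "s = 1"
  proof -
    have x0: "abs (3*((0) + t) + 2) < abs (3*((j) + t) + 2)" using h0[unfolded p_y p_z] sv cc_less[OF k r_y r_z] by simp
    note y0 = x0[unfolded cv_less]
    have x1: "3 * int k < 2 * abs (3*((0) + t) + 2)" using h1[unfolded p_z] sv cc_neg[OF k r_z] by simp
    note y1 = x1[unfolded cv_neg[OF hk]]
    show False using y0 y1 t1 t2 hk a0 a1 by smt
  qed
  have fm1: False if sv: "s = -1"
  proof -
    have x0: "abs (3*((j) + t) + 2) < abs (3*((0) + t) + 2)" using h0[unfolded p_y p_z] sv cc_less[OF k r_z r_y] by simp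
    note y0 = x0[unfolded cv_less]
    have x1: "2 * abs (3*((0) + t) + 2) < 3 * int k" using h1[unfolded p_z] sv cc_pos[OF k r_z] by simp
    note y1 = x1[unfolded cv_pos[OF hk]]
    show False using y0 y1 t1 t2 hk a0 a1 by smt
  qed
  show False using s f1 fm1 by blast
qed
lemma cfg_CB:
  fixes c m :: int and j :: int
  assumes k: "k > 0" and hk: "int k = 2*h"
    and a0: "1 \<le> j"
    and a1: "j \<le> int k - 2"
    and d_y: "y = c + (j)"
    and d_z: "z = c + (0)"
    and d_w: "w = c + (j + 1)"
  shows "\<not> (prj k m y < prj k m z \<and> prj k m z < 0 \<and> 0 < prj k m w)"
proof
  assume H: "prj k m y < prj k m z \<and> prj k m z < 0 \<and> 0 < prj k m w"
  obtain t s where t1: "- int k \<le> t" and t2: "t < - int k + int k" and s: "s = 1 \<or> s = -1"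
     and P: "\<And>x. prj k m x = s * cc k (3*(x - c) + 3*t + 2)"
    using prj_norm[OF k, of "- int k" m c] by blast
  have r_y: "abs (3*((j) + t) + 2) \<le> 3 * int k" using t1 t2 hk a0 a1 by smt
  have p_y: "prj k m y = s * cc k (3*((j) + t) + 2)" using P[of y] unfolding d_y by (simp add: algebra_simps)
  have r_z: "abs (3*((0) + t) + 2) \<le> 3 * int k" using t1 t2 hk a0 a1 by smt
  have p_z: "prj k m z = s * cc k (3*((0) + t) + 2)" using P[of z] unfolding d_z by (simp add: algebra_simps)
  have r_w: "abs (3*((j + 1) + t) + 2) \<le> 3 * int k" using t1 t2 hk a0 a1 by smt
  have p_w: "prj k m w = s * cc k (3*((j + 1) + t) + 2)" using P[of w] unfolding d_w by (simp add: algebra_simps)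
  have h0: "prj k m y < prj k m z" using H by blast
  have h1: "prj k m z < 0" using H by blast
  have h2: "0 < prj k m w" using H by blast
  have f1: False if sv: "s = 1"
  proof -
    have x0: "abs (3*((0) + t) + 2) < abs (3*((j) + t) + 2)" using h0[unfolded p_y p_z] sv cc_less[OF k r_y r_z] by simp
    note y0 = x0[unfolded cv_less]
    have x1: "3 * int k < 2 * abs (3*((0) + t) + 2)" using h1[unfolded p_z] sv cc_neg[OF k r_z] by simp
    note y1 = x1[unfolded cv_neg[OF hk]]
    have x2: "2 * abs (3*((j + 1) + t) + 2) < 3 * int k" using h2[unfolded p_w] sv cc_pos[OF k r_w] by simp
    note y2 = x2[unfolded cv_pos[OF hk]]
    show False using y0 y1 y2 t1 t2 hk a0 a1 by smt
  qed
  have fm1: False if sv: "s = -1"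
  proof -
    have x0: "abs (3*((j) + t) + 2) < abs (3*((0) + t) + 2)" using h0[unfolded p_y p_z] sv cc_less[OF k r_z r_y] by simp
    note y0 = x0[unfolded cv_less]
    have x1: "2 * abs (3*((0) + t) + 2) < 3 * int k" using h1[unfolded p_z] sv cc_pos[OF k r_z] by simp
    note y1 = x1[unfolded cv_pos[OF hk]]
    have x2: "3 * int k < 2 * abs (3*((j + 1) + t) + 2)" using h2[unfolded p_w] sv cc_neg[OF k r_w] by simp
    note y2 = x2[unfolded cv_neg[OF hk]]
    show False using y0 y1 y2 t1 t2 hk a0 a1 by smt
  qed
  show False using s f1 fm1 by blast
qed
lemma cfg_CC:
  fixes c m :: int and j :: int
  assumes k: "k > 0" and hk: "int k = 2*h"
    and a0: "1 \<le> j"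
    and a1: "j \<le> int k - 2"
    and d_y: "y = c + (- j)"
    and d_z: "z = c + (0)"
    and d_w: "w = c + (- j - 1)"
  shows "\<not> (prj k m y < prj k m z \<and> prj k m z < 0 \<and> 0 < prj k m w)"
proof
  assume H: "prj k m y < prj k m z \<and> prj k m z < 0 \<and> 0 < prj k m w"
  obtain t s where t1: "-1 \<le> t" and t2: "t < -1 + int k" and s: "s = 1 \<or> s = -1"
     and P: "\<And>x. prj k m x = s * cc k (3*(x - c) + 3*t + 2)"
    using prj_norm[OF k, of "-1" m c] by blast
  have r_y: "abs (3*((- j) + t) + 2) \<le> 3 * int k" using t1 t2 hk a0 a1 by smt
  have p_y: "prj k m y = s * cc k (3*((- j) + t) + 2)" using P[of y] unfolding d_y by (simp add: algebra_simps)
  have r_z: "abs (3*((0) + t) + 2) \<le> 3 * int k" using t1 t2 hk a0 a1 by smt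
  have p_z: "prj k m z = s * cc k (3*((0) + t) + 2)" using P[of z] unfolding d_z by (simp add: algebra_simps)
  have r_w: "abs (3*((- j - 1) + t) + 2) \<le> 3 * int k" using t1 t2 hk a0 a1 by smt
  have p_w: "prj k m w = s * cc k (3*((- j - 1) + t) + 2)" using P[of w] unfolding d_w by (simp add: algebra_simps)
  have h0: "prj k m y < prj k m z" using H by blast
  have h1: "prj k m z < 0" using H by blast
  have h2: "0 < prj k m w" using H by blast
  have f1: False if sv: "s = 1"
  proof -
    have x0: "abs (3*((0) + t) + 2) < abs (3*((- j) + t) + 2)" using h0[unfolded p_y p_z] sv cc_less[OF k r_y r_z] by simp
    note y0 = x0[unfolded cv_less]
    have x1: "3 * int k < 2 * abs (3*((0) + t) + 2)" using h1[unfolded p_z] sv cc_neg[OF k r_z] by simp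
    note y1 = x1[unfolded cv_neg[OF hk]]
    have x2: "2 * abs (3*((- j - 1) + t) + 2) < 3 * int k" using h2[unfolded p_w] sv cc_pos[OF k r_w] by simp
    note y2 = x2[unfolded cv_pos[OF hk]]
    show False using y0 y1 y2 t1 t2 hk a0 a1 by smt
  qed
  have fm1: False if sv: "s = -1"
  proof -
    have x0: "abs (3*((- j) + t) + 2) < abs (3*((0) + t) + 2)" using h0[unfolded p_y p_z] sv cc_less[OF k r_z r_y] by simp
    note y0 = x0[unfolded cv_less]
    have x1: "2 * abs (3*((0) + t) + 2) < 3 * int k" using h1[unfolded p_z] sv cc_pos[OF k r_z] by simp
    note y1 = x1[unfolded cv_pos[OF hk]]
    have x2: "3 * int k < 2 * abs (3*((- j - 1) + t) + 2)" using h2[unfolded p_w] sv cc_neg[OF k r_w] by simp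
    note y2 = x2[unfolded cv_neg[OF hk]]
    show False using y0 y1 y2 t1 t2 hk a0 a1 by smt
  qed
  show False using s f1 fm1 by blast
qed
lemma cfg_CE:
  fixes c m :: int and j :: int
  assumes k: "k > 0" and hk: "int k = 2*h"
    and a0: "1 \<le> j"
    and a1: "j \<le> int k - 2"
    and d_y: "y = c + (- (int k - 1))"
    and d_z: "z = c + (0)"
    and d_w: "w = c + (- j)"
  shows "\<not> (prj k m y < prj k m z \<and> prj k m z < 0 \<and> 0 < prj k m w)"
proof
  assume H: "prj k m y < prj k m z \<and> prj k m z < 0 \<and> 0 < prj k m w"
  obtain t s where t1: "-1 \<le> t" and t2: "t < -1 + int k" and s: "s = 1 \<or> s = -1"
     and P: "\<And>x. prj k m x = s * cc k (3*(x - c) + 3*t + 2)"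
    using prj_norm[OF k, of "-1" m c] by blast
  have r_y: "abs (3*((- (int k - 1)) + t) + 2) \<le> 3 * int k" using t1 t2 hk a0 a1 by smt
  have p_y: "prj k m y = s * cc k (3*((- (int k - 1)) + t) + 2)" using P[of y] unfolding d_y by (simp add: algebra_simps)
  have r_z: "abs (3*((0) + t) + 2) \<le> 3 * int k" using t1 t2 hk a0 a1 by smt
  have p_z: "prj k m z = s * cc k (3*((0) + t) + 2)" using P[of z] unfolding d_z by (simp add: algebra_simps)
  have r_w: "abs (3*((- j) + t) + 2) \<le> 3 * int k" using t1 t2 hk a0 a1 by smt
  have p_w: "prj k m w = s * cc k (3*((- j) + t) + 2)" using P[of w] unfolding d_w by (simp add: algebra_simps)
  have h0: "prj k m y < prj k m z" using H by blast
  have h1: "prj k m z < 0" using H by blast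
  have h2: "0 < prj k m w" using H by blast
  have f1: False if sv: "s = 1"
  proof -
    have x0: "abs (3*((0) + t) + 2) < abs (3*((- (int k - 1)) + t) + 2)" using h0[unfolded p_y p_z] sv cc_less[OF k r_y r_z] by simp
    note y0 = x0[unfolded cv_less]
    have x1: "3 * int k < 2 * abs (3*((0) + t) + 2)" using h1[unfolded p_z] sv cc_neg[OF k r_z] by simp
    note y1 = x1[unfolded cv_neg[OF hk]]
    have x2: "2 * abs (3*((- j) + t) + 2) < 3 * int k" using h2[unfolded p_w] sv cc_pos[OF k r_w] by simp
    note y2 = x2[unfolded cv_pos[OF hk]]
    show False using y0 y1 y2 t1 t2 hk a0 a1 by smt
  qed
  have fm1: False if sv: "s = -1"
  proof -
    have x0: "abs (3*((- (int k - 1)) + t) + 2) < abs (3*((0) + t) + 2)" using h0[unfolded p_y p_z] sv cc_less[OF k r_z r_y] by simp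
    note y0 = x0[unfolded cv_less]
    have x1: "2 * abs (3*((0) + t) + 2) < 3 * int k" using h1[unfolded p_z] sv cc_pos[OF k r_z] by simp
    note y1 = x1[unfolded cv_pos[OF hk]]
    have x2: "3 * int k < 2 * abs (3*((- j) + t) + 2)" using h2[unfolded p_w] sv cc_neg[OF k r_w] by simp
    note y2 = x2[unfolded cv_neg[OF hk]]
    show False using y0 y1 y2 t1 t2 hk a0 a1 by smt
  qed
  show False using s f1 fm1 by blast
qed
lemma cfg_K1:
  fixes c m h :: int
  assumes k: "k > 0" and hk: "int k = 2*h"
    and a0: "2 \<le> h"
    and d_x1: "x1 = c + (- h - (0))"
    and d_x2: "x2 = c + (- h - (1))"
    and d_x3: "x3 = c + (- h - (-1))"
  shows "\<not> (prj k m x1 < prj k m x2 \<and> prj k m x2 < prj k m x3)"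
proof
  assume H: "prj k m x1 < prj k m x2 \<and> prj k m x2 < prj k m x3"
  obtain t s where t1: "-1 \<le> t" and t2: "t < -1 + int k" and s: "s = 1 \<or> s = -1"
     and P: "\<And>x. prj k m x = s * cc k (3*(x - c) + 3*t + 2)"
    using prj_norm[OF k, of "-1" m c] by blast
  have r_x1: "abs (3*((- h - (0)) + t) + 2) \<le> 3 * int k" using t1 t2 hk a0 by smt
  have p_x1: "prj k m x1 = s * cc k (3*((- h - (0)) + t) + 2)" using P[of x1] unfolding d_x1 by (simp add: algebra_simps)
  have r_x2: "abs (3*((- h - (1)) + t) + 2) \<le> 3 * int k" using t1 t2 hk a0 by smt
  have p_x2: "prj k m x2 = s * cc k (3*((- h - (1)) + t) + 2)" using P[of x2] unfolding d_x2 by (simp add: algebra_simps)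
  have r_x3: "abs (3*((- h - (-1)) + t) + 2) \<le> 3 * int k" using t1 t2 hk a0 by smt
  have p_x3: "prj k m x3 = s * cc k (3*((- h - (-1)) + t) + 2)" using P[of x3] unfolding d_x3 by (simp add: algebra_simps)
  have h0: "prj k m x1 < prj k m x2" using H by blast
  have h1: "prj k m x2 < prj k m x3" using H by blast
  have f1: False if sv: "s = 1"
  proof -
    have x0: "abs (3*((- h - (1)) + t) + 2) < abs (3*((- h - (0)) + t) + 2)" using h0[unfolded p_x1 p_x2] sv cc_less[OF k r_x1 r_x2] by simp
    note y0 = x0[unfolded cv_less]
    have x1: "abs (3*((- h - (-1)) + t) + 2) < abs (3*((- h - (1)) + t) + 2)" using h1[unfolded p_x2 p_x3] sv cc_less[OF k r_x2 r_x3] by simp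
    note y1 = x1[unfolded cv_less]
    show False using y0 y1 t1 t2 hk a0 by smt
  qed
  have fm1: False if sv: "s = -1"
  proof -
    have x0: "abs (3*((- h - (0)) + t) + 2) < abs (3*((- h - (1)) + t) + 2)" using h0[unfolded p_x1 p_x2] sv cc_less[OF k r_x2 r_x1] by simp
    note y0 = x0[unfolded cv_less]
    have x1: "abs (3*((- h - (1)) + t) + 2) < abs (3*((- h - (-1)) + t) + 2)" using h1[unfolded p_x2 p_x3] sv cc_less[OF k r_x3 r_x2] by simp
    note y1 = x1[unfolded cv_less]
    show False using y0 y1 t1 t2 hk a0 by smt
  qed
  show False using s f1 fm1 by blast
qed
lemma cfg_K2e:
  fixes c m h r :: int
  assumes k: "k > 0" and hk: "int k = 2*h"
    and a0: "2 \<le> r"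
    and a1: "r \<le> h - 1"
    and d_n2: "n2 = c + (- h - (-(r-1)))"
    and d_p1: "p1 = c + (- h - (r))"
    and d_n0: "n0 = c + (- h - (-r))"
  shows "\<not> (prj k m n2 < prj k m p1 \<and> prj k m p1 < prj k m n0)"
proof
  assume H: "prj k m n2 < prj k m p1 \<and> prj k m p1 < prj k m n0"
  obtain t s where t1: "-1 \<le> t" and t2: "t < -1 + int k" and s: "s = 1 \<or> s = -1"
     and P: "\<And>x. prj k m x = s * cc k (3*(x - c) + 3*t + 2)"
    using prj_norm[OF k, of "-1" m c] by blast
  have r_n2: "abs (3*((- h - (-(r-1))) + t) + 2) \<le> 3 * int k" using t1 t2 hk a0 a1 by smt
  have p_n2: "prj k m n2 = s * cc k (3*((- h - (-(r-1))) + t) + 2)" using P[of n2] unfolding d_n2 by (simp add: algebra_simps)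
  have r_p1: "abs (3*((- h - (r)) + t) + 2) \<le> 3 * int k" using t1 t2 hk a0 a1 by smt
  have p_p1: "prj k m p1 = s * cc k (3*((- h - (r)) + t) + 2)" using P[of p1] unfolding d_p1 by (simp add: algebra_simps)
  have r_n0: "abs (3*((- h - (-r)) + t) + 2) \<le> 3 * int k" using t1 t2 hk a0 a1 by smt
  have p_n0: "prj k m n0 = s * cc k (3*((- h - (-r)) + t) + 2)" using P[of n0] unfolding d_n0 by (simp add: algebra_simps)
  have h0: "prj k m n2 < prj k m p1" using H by blast
  have h1: "prj k m p1 < prj k m n0" using H by blast
  have f1: False if sv: "s = 1"
  proof -
    have x0: "abs (3*((- h - (r)) + t) + 2) < abs (3*((- h - (-(r-1))) + t) + 2)" using h0[unfolded p_n2 p_p1] sv cc_less[OF k r_n2 r_p1] by simp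
    note y0 = x0[unfolded cv_less]
    have x1: "abs (3*((- h - (-r)) + t) + 2) < abs (3*((- h - (r)) + t) + 2)" using h1[unfolded p_p1 p_n0] sv cc_less[OF k r_p1 r_n0] by simp
    note y1 = x1[unfolded cv_less]
    show False using y0 y1 t1 t2 hk a0 a1 by smt
  qed
  have fm1: False if sv: "s = -1"
  proof -
    have x0: "abs (3*((- h - (-(r-1))) + t) + 2) < abs (3*((- h - (r)) + t) + 2)" using h0[unfolded p_n2 p_p1] sv cc_less[OF k r_p1 r_n2] by simp
    note y0 = x0[unfolded cv_less]
    have x1: "abs (3*((- h - (r)) + t) + 2) < abs (3*((- h - (-r)) + t) + 2)" using h1[unfolded p_p1 p_n0] sv cc_less[OF k r_n0 r_p1] by simp
    note y1 = x1[unfolded cv_less]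
    show False using y0 y1 t1 t2 hk a0 a1 by smt
  qed
  show False using s f1 fm1 by blast
qed
lemma cfg_K3e:
  fixes c m h r :: int
  assumes k: "k > 0" and hk: "int k = 2*h"
    and a0: "2 \<le> r"
    and a1: "r \<le> h - 1"
    and d_n2: "n2 = c + (- h - (-(r-1)))"
    and d_n0: "n0 = c + (- h - (-r))"
    and d_p1: "p1 = c + (- h - (r))"
    and d_n1: "n1 = c + (- h - (r-1))"
  shows "\<not> (prj k m n2 < prj k m n0 \<and> prj k m n0 < prj k m p1 \<and> prj k m p1 < prj k m n1)"
proof
  assume H: "prj k m n2 < prj k m n0 \<and> prj k m n0 < prj k m p1 \<and> prj k m p1 < prj k m n1"
  obtain t s where t1: "-1 \<le> t" and t2: "t < -1 + int k" and s: "s = 1 \<or> s = -1"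
     and P: "\<And>x. prj k m x = s * cc k (3*(x - c) + 3*t + 2)"
    using prj_norm[OF k, of "-1" m c] by blast
  have r_n2: "abs (3*((- h - (-(r-1))) + t) + 2) \<le> 3 * int k" using t1 t2 hk a0 a1 by smt
  have p_n2: "prj k m n2 = s * cc k (3*((- h - (-(r-1))) + t) + 2)" using P[of n2] unfolding d_n2 by (simp add: algebra_simps)
  have r_n0: "abs (3*((- h - (-r)) + t) + 2) \<le> 3 * int k" using t1 t2 hk a0 a1 by smt
  have p_n0: "prj k m n0 = s * cc k (3*((- h - (-r)) + t) + 2)" using P[of n0] unfolding d_n0 by (simp add: algebra_simps)
  have r_p1: "abs (3*((- h - (r)) + t) + 2) \<le> 3 * int k" using t1 t2 hk a0 a1 by smt
  have p_p1: "prj k m p1 = s * cc k (3*((- h - (r)) + t) + 2)" using P[of p1] unfolding d_p1 by (simp add: algebra_simps)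
  have r_n1: "abs (3*((- h - (r-1)) + t) + 2) \<le> 3 * int k" using t1 t2 hk a0 a1 by smt
  have p_n1: "prj k m n1 = s * cc k (3*((- h - (r-1)) + t) + 2)" using P[of n1] unfolding d_n1 by (simp add: algebra_simps)
  have h0: "prj k m n2 < prj k m n0" using H by blast
  have h1: "prj k m n0 < prj k m p1" using H by blast
  have h2: "prj k m p1 < prj k m n1" using H by blast
  have f1: False if sv: "s = 1"
  proof -
    have x0: "abs (3*((- h - (-r)) + t) + 2) < abs (3*((- h - (-(r-1))) + t) + 2)" using h0[unfolded p_n2 p_n0] sv cc_less[OF k r_n2 r_n0] by simp
    note y0 = x0[unfolded cv_less]
    have x1: "abs (3*((- h - (r)) + t) + 2) < abs (3*((- h - (-r)) + t) + 2)" using h1[unfolded p_n0 p_p1] sv cc_less[OF k r_n0 r_p1] by simp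
    note y1 = x1[unfolded cv_less]
    have x2: "abs (3*((- h - (r-1)) + t) + 2) < abs (3*((- h - (r)) + t) + 2)" using h2[unfolded p_p1 p_n1] sv cc_less[OF k r_p1 r_n1] by simp
    note y2 = x2[unfolded cv_less]
    show False using y0 y1 y2 t1 t2 hk a0 a1 by smt
  qed
  have fm1: False if sv: "s = -1"
  proof -
    have x0: "abs (3*((- h - (-(r-1))) + t) + 2) < abs (3*((- h - (-r)) + t) + 2)" using h0[unfolded p_n2 p_n0] sv cc_less[OF k r_n0 r_n2] by simp
    note y0 = x0[unfolded cv_less]
    have x1: "abs (3*((- h - (-r)) + t) + 2) < abs (3*((- h - (r)) + t) + 2)" using h1[unfolded p_n0 p_p1] sv cc_less[OF k r_p1 r_n0] by simp
    note y1 = x1[unfolded cv_less]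
    have x2: "abs (3*((- h - (r)) + t) + 2) < abs (3*((- h - (r-1)) + t) + 2)" using h2[unfolded p_p1 p_n1] sv cc_less[OF k r_n1 r_p1] by simp
    note y2 = x2[unfolded cv_less]
    show False using y0 y1 y2 t1 t2 hk a0 a1 by smt
  qed
  show False using s f1 fm1 by blast
qed
lemma cfg_K4e:
  fixes c m h r :: int
  assumes k: "k > 0" and hk: "int k = 2*h"
    and a0: "2 \<le> r"
    and a1: "r \<le> h - 1"
    and d_n2: "n2 = c + (- h - (-(r-1)))"
    and d_n1: "n1 = c + (- h - (r-1))"
    and d_p1: "p1 = c + (- h - (r))"
    and d_n0: "n0 = c + (- h - (-r))"
  shows "\<not> (prj k m n2 < prj k m n1 \<and> prj k m n1 < prj k m p1 \<and> prj k m p1 < prj k m n0)"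
proof
  assume H: "prj k m n2 < prj k m n1 \<and> prj k m n1 < prj k m p1 \<and> prj k m p1 < prj k m n0"
  obtain t s where t1: "-1 \<le> t" and t2: "t < -1 + int k" and s: "s = 1 \<or> s = -1"
     and P: "\<And>x. prj k m x = s * cc k (3*(x - c) + 3*t + 2)"
    using prj_norm[OF k, of "-1" m c] by blast
  have r_n2: "abs (3*((- h - (-(r-1))) + t) + 2) \<le> 3 * int k" using t1 t2 hk a0 a1 by smt
  have p_n2: "prj k m n2 = s * cc k (3*((- h - (-(r-1))) + t) + 2)" using P[of n2] unfolding d_n2 by (simp add: algebra_simps)
  have r_n1: "abs (3*((- h - (r-1)) + t) + 2) \<le> 3 * int k" using t1 t2 hk a0 a1 by smt
  have p_n1: "prj k m n1 = s * cc k (3*((- h - (r-1)) + t) + 2)" using P[of n1] unfolding d_n1 by (simp add: algebra_simps)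
  have r_p1: "abs (3*((- h - (r)) + t) + 2) \<le> 3 * int k" using t1 t2 hk a0 a1 by smt
  have p_p1: "prj k m p1 = s * cc k (3*((- h - (r)) + t) + 2)" using P[of p1] unfolding d_p1 by (simp add: algebra_simps)
  have r_n0: "abs (3*((- h - (-r)) + t) + 2) \<le> 3 * int k" using t1 t2 hk a0 a1 by smt
  have p_n0: "prj k m n0 = s * cc k (3*((- h - (-r)) + t) + 2)" using P[of n0] unfolding d_n0 by (simp add: algebra_simps)
  have h0: "prj k m n2 < prj k m n1" using H by blast
  have h1: "prj k m n1 < prj k m p1" using H by blast
  have h2: "prj k m p1 < prj k m n0" using H by blast
  have f1: False if sv: "s = 1"
  proof -
    have x0: "abs (3*((- h - (r-1)) + t) + 2) < abs (3*((- h - (-(r-1))) + t) + 2)" using h0[unfolded p_n2 p_n1] sv cc_less[OF k r_n2 r_n1] by simp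
    note y0 = x0[unfolded cv_less]
    have x1: "abs (3*((- h - (r)) + t) + 2) < abs (3*((- h - (r-1)) + t) + 2)" using h1[unfolded p_n1 p_p1] sv cc_less[OF k r_n1 r_p1] by simp
    note y1 = x1[unfolded cv_less]
    have x2: "abs (3*((- h - (-r)) + t) + 2) < abs (3*((- h - (r)) + t) + 2)" using h2[unfolded p_p1 p_n0] sv cc_less[OF k r_p1 r_n0] by simp
    note y2 = x2[unfolded cv_less]
    show False using y0 y1 y2 t1 t2 hk a0 a1 by smt
  qed
  have fm1: False if sv: "s = -1"
  proof -
    have x0: "abs (3*((- h - (-(r-1))) + t) + 2) < abs (3*((- h - (r-1)) + t) + 2)" using h0[unfolded p_n2 p_n1] sv cc_less[OF k r_n1 r_n2] by simp
    note y0 = x0[unfolded cv_less]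
    have x1: "abs (3*((- h - (r-1)) + t) + 2) < abs (3*((- h - (r)) + t) + 2)" using h1[unfolded p_n1 p_p1] sv cc_less[OF k r_p1 r_n1] by simp
    note y1 = x1[unfolded cv_less]
    have x2: "abs (3*((- h - (r)) + t) + 2) < abs (3*((- h - (-r)) + t) + 2)" using h2[unfolded p_p1 p_n0] sv cc_less[OF k r_n0 r_p1] by simp
    note y2 = x2[unfolded cv_less]
    show False using y0 y1 y2 t1 t2 hk a0 a1 by smt
  qed
  show False using s f1 fm1 by blast
qed
lemma cfg_K2o:
  fixes c m h r :: int
  assumes k: "k > 0" and hk: "int k = 2*h"
    and a0: "1 \<le> r"
    and a1: "r \<le> h - 1"
    and d_n2: "n2 = c + (- h - (r-1))"
    and d_p1: "p1 = c + (- h - (-(r+1)))"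
    and d_n0: "n0 = c + (- h - (r))"
  shows "\<not> (prj k m n2 < prj k m p1 \<and> prj k m p1 < prj k m n0)"
proof
  assume H: "prj k m n2 < prj k m p1 \<and> prj k m p1 < prj k m n0"
  obtain t s where t1: "-1 \<le> t" and t2: "t < -1 + int k" and s: "s = 1 \<or> s = -1"
     and P: "\<And>x. prj k m x = s * cc k (3*(x - c) + 3*t + 2)"
    using prj_norm[OF k, of "-1" m c] by blast
  have r_n2: "abs (3*((- h - (r-1)) + t) + 2) \<le> 3 * int k" using t1 t2 hk a0 a1 by smt
  have p_n2: "prj k m n2 = s * cc k (3*((- h - (r-1)) + t) + 2)" using P[of n2] unfolding d_n2 by (simp add: algebra_simps)
  have r_p1: "abs (3*((- h - (-(r+1))) + t) + 2) \<le> 3 * int k" using t1 t2 hk a0 a1 by smt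
  have p_p1: "prj k m p1 = s * cc k (3*((- h - (-(r+1))) + t) + 2)" using P[of p1] unfolding d_p1 by (simp add: algebra_simps)
  have r_n0: "abs (3*((- h - (r)) + t) + 2) \<le> 3 * int k" using t1 t2 hk a0 a1 by smt
  have p_n0: "prj k m n0 = s * cc k (3*((- h - (r)) + t) + 2)" using P[of n0] unfolding d_n0 by (simp add: algebra_simps)
  have h0: "prj k m n2 < prj k m p1" using H by blast
  have h1: "prj k m p1 < prj k m n0" using H by blast
  have f1: False if sv: "s = 1"
  proof -
    have x0: "abs (3*((- h - (-(r+1))) + t) + 2) < abs (3*((- h - (r-1)) + t) + 2)" using h0[unfolded p_n2 p_p1] sv cc_less[OF k r_n2 r_p1] by simp
    note y0 = x0[unfolded cv_less]
    have x1: "abs (3*((- h - (r)) + t) + 2) < abs (3*((- h - (-(r+1))) + t) + 2)" using h1[unfolded p_p1 p_n0] sv cc_less[OF k r_p1 r_n0] by simp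
    note y1 = x1[unfolded cv_less]
    show False using y0 y1 t1 t2 hk a0 a1 by smt
  qed
  have fm1: False if sv: "s = -1"
  proof -
    have x0: "abs (3*((- h - (r-1)) + t) + 2) < abs (3*((- h - (-(r+1))) + t) + 2)" using h0[unfolded p_n2 p_p1] sv cc_less[OF k r_p1 r_n2] by simp
    note y0 = x0[unfolded cv_less]
    have x1: "abs (3*((- h - (-(r+1))) + t) + 2) < abs (3*((- h - (r)) + t) + 2)" using h1[unfolded p_p1 p_n0] sv cc_less[OF k r_n0 r_p1] by simp
    note y1 = x1[unfolded cv_less]
    show False using y0 y1 t1 t2 hk a0 a1 by smt
  qed
  show False using s f1 fm1 by blast
qed
lemma cfg_K3o:
  fixes c m h r :: int
  assumes k: "k > 0" and hk: "int k = 2*h"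
    and a0: "1 \<le> r"
    and a1: "r \<le> h - 1"
    and d_n2: "n2 = c + (- h - (r-1))"
    and d_n0: "n0 = c + (- h - (r))"
    and d_p1: "p1 = c + (- h - (-(r+1)))"
    and d_n1: "n1 = c + (- h - (-r))"
  shows "\<not> (prj k m n2 < prj k m n0 \<and> prj k m n0 < prj k m p1 \<and> prj k m p1 < prj k m n1)"
proof
  assume H: "prj k m n2 < prj k m n0 \<and> prj k m n0 < prj k m p1 \<and> prj k m p1 < prj k m n1"
  obtain t s where t1: "-1 \<le> t" and t2: "t < -1 + int k" and s: "s = 1 \<or> s = -1"
     and P: "\<And>x. prj k m x = s * cc k (3*(x - c) + 3*t + 2)"
    using prj_norm[OF k, of "-1" m c] by blast
  have r_n2: "abs (3*((- h - (r-1)) + t) + 2) \<le> 3 * int k" using t1 t2 hk a0 a1 by smt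
  have p_n2: "prj k m n2 = s * cc k (3*((- h - (r-1)) + t) + 2)" using P[of n2] unfolding d_n2 by (simp add: algebra_simps)
  have r_n0: "abs (3*((- h - (r)) + t) + 2) \<le> 3 * int k" using t1 t2 hk a0 a1 by smt
  have p_n0: "prj k m n0 = s * cc k (3*((- h - (r)) + t) + 2)" using P[of n0] unfolding d_n0 by (simp add: algebra_simps)
  have r_p1: "abs (3*((- h - (-(r+1))) + t) + 2) \<le> 3 * int k" using t1 t2 hk a0 a1 by smt
  have p_p1: "prj k m p1 = s * cc k (3*((- h - (-(r+1))) + t) + 2)" using P[of p1] unfolding d_p1 by (simp add: algebra_simps)
  have r_n1: "abs (3*((- h - (-r)) + t) + 2) \<le> 3 * int k" using t1 t2 hk a0 a1 by smt
  have p_n1: "prj k m n1 = s * cc k (3*((- h - (-r)) + t) + 2)" using P[of n1] unfolding d_n1 by (simp add: algebra_simps)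
  have h0: "prj k m n2 < prj k m n0" using H by blast
  have h1: "prj k m n0 < prj k m p1" using H by blast
  have h2: "prj k m p1 < prj k m n1" using H by blast
  have f1: False if sv: "s = 1"
  proof -
    have x0: "abs (3*((- h - (r)) + t) + 2) < abs (3*((- h - (r-1)) + t) + 2)" using h0[unfolded p_n2 p_n0] sv cc_less[OF k r_n2 r_n0] by simp
    note y0 = x0[unfolded cv_less]
    have x1: "abs (3*((- h - (-(r+1))) + t) + 2) < abs (3*((- h - (r)) + t) + 2)" using h1[unfolded p_n0 p_p1] sv cc_less[OF k r_n0 r_p1] by simp
    note y1 = x1[unfolded cv_less]
    have x2: "abs (3*((- h - (-r)) + t) + 2) < abs (3*((- h - (-(r+1))) + t) + 2)" using h2[unfolded p_p1 p_n1] sv cc_less[OF k r_p1 r_n1] by simp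
    note y2 = x2[unfolded cv_less]
    show False using y0 y1 y2 t1 t2 hk a0 a1 by smt
  qed
  have fm1: False if sv: "s = -1"
  proof -
    have x0: "abs (3*((- h - (r-1)) + t) + 2) < abs (3*((- h - (r)) + t) + 2)" using h0[unfolded p_n2 p_n0] sv cc_less[OF k r_n0 r_n2] by simp
    note y0 = x0[unfolded cv_less]
    have x1: "abs (3*((- h - (r)) + t) + 2) < abs (3*((- h - (-(r+1))) + t) + 2)" using h1[unfolded p_n0 p_p1] sv cc_less[OF k r_p1 r_n0] by simp
    note y1 = x1[unfolded cv_less]
    have x2: "abs (3*((- h - (-(r+1))) + t) + 2) < abs (3*((- h - (-r)) + t) + 2)" using h2[unfolded p_p1 p_n1] sv cc_less[OF k r_n1 r_p1] by simp
    note y2 = x2[unfolded cv_less]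
    show False using y0 y1 y2 t1 t2 hk a0 a1 by smt
  qed
  show False using s f1 fm1 by blast
qed
lemma cfg_K4o:
  fixes c m h r :: int
  assumes k: "k > 0" and hk: "int k = 2*h"
    and a0: "1 \<le> r"
    and a1: "r \<le> h - 1"
    and d_n2: "n2 = c + (- h - (r-1))"
    and d_n1: "n1 = c + (- h - (-r))"
    and d_p1: "p1 = c + (- h - (-(r+1)))"
    and d_n0: "n0 = c + (- h - (r))"
  shows "\<not> (prj k m n2 < prj k m n1 \<and> prj k m n1 < prj k m p1 \<and> prj k m p1 < prj k m n0)"
proof
  assume H: "prj k m n2 < prj k m n1 \<and> prj k m n1 < prj k m p1 \<and> prj k m p1 < prj k m n0"
  obtain t s where t1: "-1 \<le> t" and t2: "t < -1 + int k" and s: "s = 1 \<or> s = -1"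
     and P: "\<And>x. prj k m x = s * cc k (3*(x - c) + 3*t + 2)"
    using prj_norm[OF k, of "-1" m c] by blast
  have r_n2: "abs (3*((- h - (r-1)) + t) + 2) \<le> 3 * int k" using t1 t2 hk a0 a1 by smt
  have p_n2: "prj k m n2 = s * cc k (3*((- h - (r-1)) + t) + 2)" using P[of n2] unfolding d_n2 by (simp add: algebra_simps)
  have r_n1: "abs (3*((- h - (-r)) + t) + 2) \<le> 3 * int k" using t1 t2 hk a0 a1 by smt
  have p_n1: "prj k m n1 = s * cc k (3*((- h - (-r)) + t) + 2)" using P[of n1] unfolding d_n1 by (simp add: algebra_simps)
  have r_p1: "abs (3*((- h - (-(r+1))) + t) + 2) \<le> 3 * int k" using t1 t2 hk a0 a1 by smt
  have p_p1: "prj k m p1 = s * cc k (3*((- h - (-(r+1))) + t) + 2)" using P[of p1] unfolding d_p1 by (simp add: algebra_simps)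
  have r_n0: "abs (3*((- h - (r)) + t) + 2) \<le> 3 * int k" using t1 t2 hk a0 a1 by smt
  have p_n0: "prj k m n0 = s * cc k (3*((- h - (r)) + t) + 2)" using P[of n0] unfolding d_n0 by (simp add: algebra_simps)
  have h0: "prj k m n2 < prj k m n1" using H by blast
  have h1: "prj k m n1 < prj k m p1" using H by blast
  have h2: "prj k m p1 < prj k m n0" using H by blast
  have f1: False if sv: "s = 1"
  proof -
    have x0: "abs (3*((- h - (-r)) + t) + 2) < abs (3*((- h - (r-1)) + t) + 2)" using h0[unfolded p_n2 p_n1] sv cc_less[OF k r_n2 r_n1] by simp
    note y0 = x0[unfolded cv_less]
    have x1: "abs (3*((- h - (-(r+1))) + t) + 2) < abs (3*((- h - (-r)) + t) + 2)" using h1[unfolded p_n1 p_p1] sv cc_less[OF k r_n1 r_p1] by simp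
    note y1 = x1[unfolded cv_less]
    have x2: "abs (3*((- h - (r)) + t) + 2) < abs (3*((- h - (-(r+1))) + t) + 2)" using h2[unfolded p_p1 p_n0] sv cc_less[OF k r_p1 r_n0] by simp
    note y2 = x2[unfolded cv_less]
    show False using y0 y1 y2 t1 t2 hk a0 a1 by smt
  qed
  have fm1: False if sv: "s = -1"
  proof -
    have x0: "abs (3*((- h - (r-1)) + t) + 2) < abs (3*((- h - (-r)) + t) + 2)" using h0[unfolded p_n2 p_n1] sv cc_less[OF k r_n1 r_n2] by simp
    note y0 = x0[unfolded cv_less]
    have x1: "abs (3*((- h - (-r)) + t) + 2) < abs (3*((- h - (-(r+1))) + t) + 2)" using h1[unfolded p_n1 p_p1] sv cc_less[OF k r_p1 r_n1] by simp
    note y1 = x1[unfolded cv_less]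
    have x2: "abs (3*((- h - (-(r+1))) + t) + 2) < abs (3*((- h - (r)) + t) + 2)" using h2[unfolded p_p1 p_n0] sv cc_less[OF k r_n0 r_p1] by simp
    note y2 = x2[unfolded cv_less]
    show False using y0 y1 y2 t1 t2 hk a0 a1 by smt
  qed
  show False using s f1 fm1 by blast
qed
lemma cfg_K5e:
  fixes c m h r e :: int
  assumes k: "k > 0" and hk: "int k = 2*h"
    and a0: "1 \<le> r"
    and a1: "r \<le> h - 1"
    and a2: "-(r-1) \<le> e"
    and a3: "e \<le> r - 2"
    and d_a: "a = c + (- h - (e))"
    and d_p1: "p1 = c + (- h - (r))"
    and d_n0: "n0 = c + (- h - (-r))"
    and d_n1: "n1 = c + (- h - (r-1))"
  shows "\<not> (prj k m a < prj k m p1 \<and> prj k m p1 < prj k m n0 \<and> prj k m n0 < prj k m n1)"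
proof
  assume H: "prj k m a < prj k m p1 \<and> prj k m p1 < prj k m n0 \<and> prj k m n0 < prj k m n1"
  obtain t s where t1: "-1 \<le> t" and t2: "t < -1 + int k" and s: "s = 1 \<or> s = -1"
     and P: "\<And>x. prj k m x = s * cc k (3*(x - c) + 3*t + 2)"
    using prj_norm[OF k, of "-1" m c] by blast
  have r_a: "abs (3*((- h - (e)) + t) + 2) \<le> 3 * int k" using t1 t2 hk a0 a1 a2 a3 by smt
  have p_a: "prj k m a = s * cc k (3*((- h - (e)) + t) + 2)" using P[of a] unfolding d_a by (simp add: algebra_simps)
  have r_p1: "abs (3*((- h - (r)) + t) + 2) \<le> 3 * int k" using t1 t2 hk a0 a1 a2 a3 by smt
  have p_p1: "prj k m p1 = s * cc k (3*((- h - (r)) + t) + 2)" using P[of p1] unfolding d_p1 by (simp add: algebra_simps)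
  have r_n0: "abs (3*((- h - (-r)) + t) + 2) \<le> 3 * int k" using t1 t2 hk a0 a1 a2 a3 by smt
  have p_n0: "prj k m n0 = s * cc k (3*((- h - (-r)) + t) + 2)" using P[of n0] unfolding d_n0 by (simp add: algebra_simps)
  have r_n1: "abs (3*((- h - (r-1)) + t) + 2) \<le> 3 * int k" using t1 t2 hk a0 a1 a2 a3 by smt
  have p_n1: "prj k m n1 = s * cc k (3*((- h - (r-1)) + t) + 2)" using P[of n1] unfolding d_n1 by (simp add: algebra_simps)
  have h0: "prj k m a < prj k m p1" using H by blast
  have h1: "prj k m p1 < prj k m n0" using H by blast
  have h2: "prj k m n0 < prj k m n1" using H by blast
  have f1: False if sv: "s = 1"
  proof -
    have x0: "abs (3*((- h - (r)) + t) + 2) < abs (3*((- h - (e)) + t) + 2)" using h0[unfolded p_a p_p1] sv cc_less[OF k r_a r_p1] by simp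
    note y0 = x0[unfolded cv_less]
    have x1: "abs (3*((- h - (-r)) + t) + 2) < abs (3*((- h - (r)) + t) + 2)" using h1[unfolded p_p1 p_n0] sv cc_less[OF k r_p1 r_n0] by simp
    note y1 = x1[unfolded cv_less]
    have x2: "abs (3*((- h - (r-1)) + t) + 2) < abs (3*((- h - (-r)) + t) + 2)" using h2[unfolded p_n0 p_n1] sv cc_less[OF k r_n0 r_n1] by simp
    note y2 = x2[unfolded cv_less]
    show False using y0 y1 y2 t1 t2 hk a0 a1 a2 a3 by smt
  qed
  have fm1: False if sv: "s = -1"
  proof -
    have x0: "abs (3*((- h - (e)) + t) + 2) < abs (3*((- h - (r)) + t) + 2)" using h0[unfolded p_a p_p1] sv cc_less[OF k r_p1 r_a] by simp
    note y0 = x0[unfolded cv_less]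
    have x1: "abs (3*((- h - (r)) + t) + 2) < abs (3*((- h - (-r)) + t) + 2)" using h1[unfolded p_p1 p_n0] sv cc_less[OF k r_n0 r_p1] by simp
    note y1 = x1[unfolded cv_less]
    have x2: "abs (3*((- h - (-r)) + t) + 2) < abs (3*((- h - (r-1)) + t) + 2)" using h2[unfolded p_n0 p_n1] sv cc_less[OF k r_n1 r_n0] by simp
    note y2 = x2[unfolded cv_less]
    show False using y0 y1 y2 t1 t2 hk a0 a1 a2 a3 by smt
  qed
  show False using s f1 fm1 by blast
qed
lemma cfg_K5o:
  fixes c m h r e :: int
  assumes k: "k > 0" and hk: "int k = 2*h"
    and a0: "1 \<le> r"
    and a1: "r \<le> h - 1"
    and a2: "-(r-1) \<le> e"
    and a3: "e \<le> r - 1"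
    and d_a: "a = c + (- h - (e))"
    and d_p1: "p1 = c + (- h - (-(r+1)))"
    and d_n0: "n0 = c + (- h - (r))"
    and d_n1: "n1 = c + (- h - (-r))"
  shows "\<not> (prj k m a < prj k m p1 \<and> prj k m p1 < prj k m n0 \<and> prj k m n0 < prj k m n1)"
proof
  assume H: "prj k m a < prj k m p1 \<and> prj k m p1 < prj k m n0 \<and> prj k m n0 < prj k m n1"
  obtain t s where t1: "-1 \<le> t" and t2: "t < -1 + int k" and s: "s = 1 \<or> s = -1"
     and P: "\<And>x. prj k m x = s * cc k (3*(x - c) + 3*t + 2)"
    using prj_norm[OF k, of "-1" m c] by blast
  have r_a: "abs (3*((- h - (e)) + t) + 2) \<le> 3 * int k" using t1 t2 hk a0 a1 a2 a3 by smt
  have p_a: "prj k m a = s * cc k (3*((- h - (e)) + t) + 2)" using P[of a] unfolding d_a by (simp add: algebra_simps)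
  have r_p1: "abs (3*((- h - (-(r+1))) + t) + 2) \<le> 3 * int k" using t1 t2 hk a0 a1 a2 a3 by smt
  have p_p1: "prj k m p1 = s * cc k (3*((- h - (-(r+1))) + t) + 2)" using P[of p1] unfolding d_p1 by (simp add: algebra_simps)
  have r_n0: "abs (3*((- h - (r)) + t) + 2) \<le> 3 * int k" using t1 t2 hk a0 a1 a2 a3 by smt
  have p_n0: "prj k m n0 = s * cc k (3*((- h - (r)) + t) + 2)" using P[of n0] unfolding d_n0 by (simp add: algebra_simps)
  have r_n1: "abs (3*((- h - (-r)) + t) + 2) \<le> 3 * int k" using t1 t2 hk a0 a1 a2 a3 by smt
  have p_n1: "prj k m n1 = s * cc k (3*((- h - (-r)) + t) + 2)" using P[of n1] unfolding d_n1 by (simp add: algebra_simps)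
  have h0: "prj k m a < prj k m p1" using H by blast
  have h1: "prj k m p1 < prj k m n0" using H by blast
  have h2: "prj k m n0 < prj k m n1" using H by blast
  have f1: False if sv: "s = 1"
  proof -
    have x0: "abs (3*((- h - (-(r+1))) + t) + 2) < abs (3*((- h - (e)) + t) + 2)" using h0[unfolded p_a p_p1] sv cc_less[OF k r_a r_p1] by simp
    note y0 = x0[unfolded cv_less]
    have x1: "abs (3*((- h - (r)) + t) + 2) < abs (3*((- h - (-(r+1))) + t) + 2)" using h1[unfolded p_p1 p_n0] sv cc_less[OF k r_p1 r_n0] by simp
    note y1 = x1[unfolded cv_less]
    have x2: "abs (3*((- h - (-r)) + t) + 2) < abs (3*((- h - (r)) + t) + 2)" using h2[unfolded p_n0 p_n1] sv cc_less[OF k r_n0 r_n1] by simp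
    note y2 = x2[unfolded cv_less]
    show False using y0 y1 y2 t1 t2 hk a0 a1 a2 a3 by smt
  qed
  have fm1: False if sv: "s = -1"
  proof -
    have x0: "abs (3*((- h - (e)) + t) + 2) < abs (3*((- h - (-(r+1))) + t) + 2)" using h0[unfolded p_a p_p1] sv cc_less[OF k r_p1 r_a] by simp
    note y0 = x0[unfolded cv_less]
    have x1: "abs (3*((- h - (-(r+1))) + t) + 2) < abs (3*((- h - (r)) + t) + 2)" using h1[unfolded p_p1 p_n0] sv cc_less[OF k r_n0 r_p1] by simp
    note y1 = x1[unfolded cv_less]
    have x2: "abs (3*((- h - (r)) + t) + 2) < abs (3*((- h - (-r)) + t) + 2)" using h2[unfolded p_n0 p_n1] sv cc_less[OF k r_n1 r_n0] by simp
    note y2 = x2[unfolded cv_less]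
    show False using y0 y1 y2 t1 t2 hk a0 a1 a2 a3 by smt
  qed
  show False using s f1 fm1 by blast
qed
lemma cfg_CD:
  fixes c m :: int and j :: int
  assumes k: "k > 0" and hk: "int k = 2*h"
    and a0: "1 \<le> j"
    and a1: "j \<le> int k - 1"
    and d_y: "y = c + (- j)"
    and d_z: "z = c + (0)"
    and d_w: "w = c + 1"
    and H: "prj k m y < prj k m z \<and> prj k m z < 0 \<and> 0 < prj k m w"
  shows "prj k m x = - cc k (3*(x - c) + 3*h - 1)"
proof -
  obtain t s where t1: "-1 \<le> t" and t2: "t < -1 + int k" and s: "s = 1 \<or> s = -1"
     and P: "\<And>x. prj k m x = s * cc k (3*(x - c) + 3*t + 2)"
    using prj_norm[OF k, of "-1" m c] by blast
  have r_y: "abs (3*((- j) + t) + 2) \<le> 3 * int k" using t1 t2 hk a0 a1 by smt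
  have p_y: "prj k m y = s * cc k (3*((- j) + t) + 2)" using P[of y] unfolding d_y by (simp add: algebra_simps)
  have r_z: "abs (3*((0) + t) + 2) \<le> 3 * int k" using t1 t2 hk a0 a1 by smt
  have p_z: "prj k m z = s * cc k (3*((0) + t) + 2)" using P[of z] unfolding d_z by (simp add: algebra_simps)
  have r_w: "abs (3*((1) + t) + 2) \<le> 3 * int k" using t1 t2 hk a0 a1 by smt
  have p_w: "prj k m w = s * cc k (3*((1) + t) + 2)" using P[of w] unfolding d_w by (simp add: algebra_simps)
  have h0: "prj k m y < prj k m z" using H by blast
  have h1: "prj k m z < 0" using H by blast
  have h2: "0 < prj k m w" using H by blast
  have f1: False if sv: "s = 1"
  proof -
    have x0: "abs (3*((0) + t) + 2) < abs (3*((- j) + t) + 2)" using h0[unfolded p_y p_z] sv cc_less[OF k r_y r_z] by simp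
    note y0 = x0[unfolded cv_less]
    have x1: "3 * int k < 2 * abs (3*((0) + t) + 2)" using h1[unfolded p_z] sv cc_neg[OF k r_z] by simp
    note y1 = x1[unfolded cv_neg[OF hk]]
    have x2: "2 * abs (3*((1) + t) + 2) < 3 * int k" using h2[unfolded p_w] sv cc_pos[OF k r_w] by simp
    note y2 = x2[unfolded cv_pos[OF hk]]
    show False using y0 y1 y2 t1 t2 hk a0 a1 by smt
  qed
  have fm1: "t = h - 1" if sv: "s = -1"
  proof -
    have x0: "abs (3*((- j) + t) + 2) < abs (3*((0) + t) + 2)" using h0[unfolded p_y p_z] sv cc_less[OF k r_z r_y] by simp
    note y0 = x0[unfolded cv_less]
    have x1: "2 * abs (3*((0) + t) + 2) < 3 * int k" using h1[unfolded p_z] sv cc_pos[OF k r_z] by simp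
    note y1 = x1[unfolded cv_pos[OF hk]]
    have x2: "3 * int k < 2 * abs (3*((1) + t) + 2)" using h2[unfolded p_w] sv cc_neg[OF k r_w] by simp
    note y2 = x2[unfolded cv_neg[OF hk]]
    show "t = h - 1" using y0 y1 y2 t1 t2 hk a0 a1 by smt
  qed
  have sm: "s = -1" using s f1 by blast
  have tt: "t = h - 1" using fm1 sm .
  have e: "3*(x - c) + 3*t + 2 = 3*(x - c) + 3*h - 1" using tt by simp
  have "prj k m x = s * cc k (3*(x - c) + 3*t + 2)" by (rule P)
  also have "\<dots> = - cc k (3*(x - c) + 3*h - 1)" unfolding e using \<open>s = -1\<close> by simp
  finally show ?thesis .
qed

lemma prj_nz:
  assumes k: "k > 0" and hk: "int k = 2*h"
  shows "prj k m x \<noteq> 0"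
proof
  assume H: "prj k m x = 0"
  obtain t s where t1: "-1 \<le> t" and t2: "t < -1 + int k" and s: "s = 1 \<or> s = -1"
     and P: "\<And>y. prj k m y = s * cc k (3*(y - x) + 3*t + 2)"
    using prj_norm[OF k, of "-1" m x] by blast
  have r: "abs (3*t + 2) \<le> 3 * int k" using t1 t2 hk by smt
  have "cc k (3*t+2) = 0" using H P[of x] s by auto
  then have "\<not> (2 * abs (3*t+2) < 3 * int k)" "\<not> (3 * int k < 2 * abs (3*t+2))"
    using cc_pos[OF k r] cc_neg[OF k r] by auto
  then show False using hk by smt
qed

lemma prj_xper: assumes "k > 0" shows "prj k m (x + 2 * int k * q) = prj k m x"
proof -
  have "3 * (x + 2 * int k * q) + 2 - 3 * m = (3*x + 2 - 3*m) + 6 * int k * q" by (simp add: algebra_simps)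
  then show ?thesis unfolding prj_def using cc_period[OF assms] by metis
qed

lemma prj_mper: assumes "k > 0" shows "prj k (m + 2 * int k * q) x = prj k m x"
proof -
  have "3 * x + 2 - 3 * (m + 2 * int k * q) = (3*x + 2 - 3*m) + 6 * int k * (-q)" by (simp add: algebra_simps)
  then show ?thesis unfolding prj_def using cc_period[OF assms] by metis
qed

lemma prj_mflip: assumes "k > 0" shows "prj k (m + int k) x = - prj k m x"
proof -
  have "3 * x + 2 - 3 * (m + int k) = ((3*x + 2 - 3*m) + 3 * int k) + 6 * int k * (-1)" by (simp add: algebra_simps)
  then show ?thesis unfolding prj_def using cc_period[OF assms] cc_flip[OF assms] by metis
qed

lemma cc_shift_down: assumes "k > 0" shows "cc k (a + 6 * int k) = cc k a"
  using cc_period[OF assms, of a 1] by simp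

lemma prj_sep:
  assumes k: "k > 0" and hk: "int k = 2*h" and ne: "(j - i) mod (2 * int k) \<noteq> 0"
  shows "\<exists>m. 0 < prj k m i \<and> prj k m j < 0"
proof -
  define g where "g = (j - i) mod (2 * int k)"
  define q where "q = (j - i) div (2 * int k)"
  have g0: "0 \<le> g" "g < 2 * int k" using k unfolding g_def by simp_all
  have g: "1 \<le> g" "g < 2 * int k" using g0 ne unfolding g_def by auto
  have jq: "j = (i + g) + 2 * int k * q" unfolding g_def q_def by simp
  have pj: "prj k m j = prj k m (i + g)" for m using prj_xper[OF k, of m "i+g" q] jq by simp
  have h1: "1 \<le> h" using k hk by simp
  show ?thesis
  proof (cases "g \<le> int k")
    case True
    define m where "m = i - h + 1"
    have "prj k m i = cc k (3*h - 1)" unfolding prj_def m_def by (simp add: algebra_simps)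
    moreover have "0 < cc k (3*h - 1)" using cc_pos[OF k, of "3*h - 1"] hk h1 by simp
    moreover have "prj k m (i+g) < 0"
    proof (cases "g \<le> h")
      case True
      have e: "prj k m (i+g) = cc k (3*g + 3*h - 1)" unfolding prj_def m_def by (simp add: algebra_simps)
      show ?thesis unfolding e using cc_neg[OF k, of "3*g + 3*h - 1"] hk h1 True g by simp
    next
      case False
      have "prj k m (i+g) = cc k ((3*g - 9*h - 1) + 6 * int k)" unfolding prj_def m_def using hk by (simp add: algebra_simps)
      then have e: "prj k m (i+g) = cc k (3*g - 9*h - 1)" using cc_shift_down[OF k] by simp
      show ?thesis unfolding e using cc_neg[OF k, of "3*g - 9*h - 1"] hk h1 False \<open>g \<le> int k\<close> g by simp
    qed
    ultimately have "0 < prj k m i \<and> prj k m j < 0" using pj[of m] by simp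
    then show ?thesis by blast
  next
    case False
    define m where "m = i + h"
    have "prj k m i = cc k (2 - 3*h)" unfolding prj_def m_def by (simp add: algebra_simps)
    moreover have "0 < cc k (2 - 3*h)" using cc_pos[OF k, of "2 - 3*h"] hk h1 by simp
    moreover have "prj k m (i+g) < 0"
    proof (cases "g \<le> 3*h - 1")
      case True
      have e: "prj k m (i+g) = cc k (3*g - 3*h + 2)" unfolding prj_def m_def by (simp add: algebra_simps)
      show ?thesis unfolding e using cc_neg[OF k, of "3*g - 3*h + 2"] hk h1 True False g by simp
    next
      case c2: False
      have "prj k m (i+g) = cc k ((3*g - 15*h + 2) + 6 * int k)" unfolding prj_def m_def using hk by (simp add: algebra_simps)
      then have e: "prj k m (i+g) = cc k (3*g - 15*h + 2)" using cc_shift_down[OF k] by simp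
      show ?thesis unfolding e using cc_neg[OF k, of "3*g - 15*h + 2"] hk h1 False c2 g by simp
    qed
    ultimately have "0 < prj k m i \<and> prj k m j < 0" using pj[of m] by simp
    then show ?thesis by blast
  qed
qed


definition dir :: "nat \<Rightarrow> int \<Rightarrow> pt" where
  "dir k m = (cos (real_of_int m * pi / real k), sin (real_of_int m * pi / real k))"

definition V :: "nat \<Rightarrow> int \<Rightarrow> pt" where
  "V k x = polyv k (nat (x mod (2 * int k)))"

lemma V_unfold: assumes "k > 0"
  shows "V k x = (cos (real_of_int (x mod (2 * int k)) * pi / real k + 2*pi/(3*real k)),
                  sin (real_of_int (x mod (2 * int k)) * pi / real k + 2*pi/(3*real k)))"
proof -
  have "0 \<le> x mod (2 * int k)" using assms by simp
  then have "real (nat (x mod (2 * int k))) = real_of_int (x mod (2 * int k))" by simp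
  then show ?thesis unfolding V_def polyv_def by simp
qed

lemma inner_V: assumes k: "k > 0" shows "inner (V k x) (dir k m) = prj k m x"
proof -
  define X where "X = x mod (2 * int k)"
  have "inner (V k x) (dir k m) = cos ((real_of_int X * pi / real k + 2*pi/(3*real k)) - real_of_int m * pi / real k)"
    unfolding V_unfold[OF k] dir_def X_def by (simp add: cos_diff)
  also have "(real_of_int X * pi / real k + 2*pi/(3*real k)) - real_of_int m * pi / real k = real_of_int (3*X + 2 - 3*m) * pi / (3 * real k)"
    using k by (simp add: field_simps)
  also have "cos (real_of_int (3*X + 2 - 3*m) * pi / (3 * real k)) = prj k m X" unfolding prj_def cc_def ..
  also have "prj k m X = prj k m x"
  proof -
    have "X = x + 2 * int k * (- (x div (2 * int k)))" unfolding X_def by (simp add: algebra_simps minus_div_mult_eq_mod[symmetric])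
    then show ?thesis using prj_xper[OF k, of m x "- (x div (2 * int k))"] by simp
  qed
  finally show ?thesis .
qed

lemma inner_o: "inner ((0,0)::pt) d = 0"
  by (cases d) simp

lemma dirs_iff: "d \<in> dirs k \<longleftrightarrow> (\<exists>m. 0 \<le> m \<and> m < int k \<and> d = dir k m)"
proof
  assume "d \<in> dirs k"
  then obtain i where i: "i \<in> {1..k}" "d = (cos (real (i - 1) * pi / real k), sin (real (i - 1) * pi / real k))"
    unfolding dirs_def by blast
  then have "d = dir k (int (i - 1))" unfolding dir_def by simp
  moreover have "0 \<le> int (i - 1)" "int (i - 1) < int k" using i by auto
  ultimately show "\<exists>m. 0 \<le> m \<and> m < int k \<and> d = dir k m" by blast
next
  assume "\<exists>m. 0 \<le> m \<and> m < int k \<and> d = dir k m"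
  then obtain m where m: "0 \<le> m" "m < int k" "d = dir k m" by blast
  define i where "i = nat m + 1"
  have "i \<in> {1..k}" using m unfolding i_def by auto
  moreover have "real (i - 1) = real_of_int m" using m unfolding i_def by simp
  ultimately show "d \<in> dirs k" unfolding dirs_def m(3) dir_def by force
qed

lemma dir_flip: assumes "k > 0" shows "dir k (m + int k) = - dir k m"
proof -
  have "real_of_int (m + int k) * pi / real k = real_of_int m * pi / real k + pi"
    using assms by (simp add: field_simps)
  then show ?thesis unfolding dir_def by simp
qed

lemma mono_extract:
  assumes k: "k > 0" and d: "d \<in> dirs k" and mp: "monotone_path d ps"
  shows "\<exists>m. \<forall>i j. i < j \<longrightarrow> j < length ps \<longrightarrow> inner (ps!i) (dir k m) < inner (ps!j) (dir k m)"
proof -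
  obtain m where dm: "d = dir k m" using d dirs_iff by blast
  from mp show ?thesis unfolding monotone_path_def
  proof
    assume "sorted_wrt (<) (map (\<lambda>p. inner p d) ps)"
    then show ?thesis unfolding sorted_wrt_iff_nth_less dm by auto
  next
    assume "sorted_wrt (>) (map (\<lambda>p. inner p d) ps)"
    then have "\<forall>i j. i < j \<longrightarrow> j < length ps \<longrightarrow> inner (ps!i) (dir k (m + int k)) < inner (ps!j) (dir k (m + int k))"
      unfolding sorted_wrt_iff_nth_less dm dir_flip[OF k] by (simp add: inner_minus_right)
    then show ?thesis by blast
  qed
qed

lemma V_dist_sq: assumes k: "k > 0"
  shows "dist (V k x) (V k y) = sqrt (2 - 2 * cos (real_of_int (x - y) * pi / real k))"
proof -
  define a where "a = real_of_int (x mod (2 * int k)) * pi / real k + 2*pi/(3*real k)"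
  define b where "b = real_of_int (y mod (2 * int k)) * pi / real k + 2*pi/(3*real k)"
  have "dist (V k x) (V k y) = sqrt ((cos a - cos b)^2 + (sin a - sin b)^2)"
    unfolding V_unfold[OF k] a_def[symmetric] b_def[symmetric] dist_Pair_Pair dist_real_def by simp
  also have "(cos a - cos b)^2 + (sin a - sin b)^2 = 2 - 2 * cos (a - b)"
    unfolding cos_diff power2_diff using sin_cos_squared_add[of a] sin_cos_squared_add[of b] by (simp add: algebra_simps)
  also have "cos (a - b) = cos (real_of_int (x - y) * pi / real k)"
  proof -
    define q where "q = x div (2 * int k) - y div (2 * int k)"
    have e: "x mod (2 * int k) - y mod (2 * int k) = (x - y) - 2 * int k * q"
      unfolding q_def by (simp add: algebra_simps minus_div_mult_eq_mod[symmetric])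
    have e2: "real_of_int (x mod (2 * int k)) - real_of_int (y mod (2 * int k)) = real_of_int (x - y) - 2 * real k * real_of_int q"
      using arg_cong[OF e, of real_of_int] by simp
    have "a - b = (real_of_int (x mod (2 * int k)) - real_of_int (y mod (2 * int k))) * pi / real k"
      unfolding a_def b_def by (simp add: diff_divide_distrib left_diff_distrib)
    also have "\<dots> = (real_of_int (x - y) - 2 * real k * real_of_int q) * pi / real k" unfolding e2 ..
    also have "\<dots> = real_of_int (x - y) * pi / real k + (2*pi) * real_of_int (- q)"
      using k by (simp add: field_simps)
    finally have "a - b = real_of_int (x - y) * pi / real k + (2*pi) * real_of_int (- q)" .
    then show ?thesis by (simp only: cos_add cos_int_2pin sin_int_2pin mult_1_right mult_zero_right diff_zero)
  qed
  finally show ?thesis .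
qed

lemma chord: assumes k: "k > 0" and n: "0 \<le> n" "n \<le> int k"
  shows "sqrt (2 - 2 * cos (real_of_int n * pi / real k)) = 2 * sin (real_of_int n * pi / (2 * real k))"
proof -
  define w where "w = real_of_int n * pi / (2 * real k)"
  have w2: "real_of_int n * pi / real k = 2 * w" unfolding w_def using k by (simp add: field_simps)
  have w0: "0 \<le> w" unfolding w_def using n by simp
  have "real_of_int n \<le> real k" using n by linarith
  then have "real_of_int n * pi \<le> real k * pi" by (simp add: mult_right_mono)
  then have wp: "w \<le> pi" unfolding w_def using k by (simp add: divide_le_eq)
  have s0: "0 \<le> sin w" using w0 wp by (simp add: sin_ge_zero)
  have e: "2 - 2 * cos (2 * w) = (2 * sin w)^2" unfolding cos_double_sin by (simp add: power2_eq_square)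
  have sq: "sqrt ((2 * sin w)^2) = 2 * sin w" using s0 by (subst real_sqrt_abs) simp
  show ?thesis unfolding w2 w_def[symmetric] e using sq .
qed

lemma norm_V: assumes "k > 0" shows "dist (V k x) (0,0) = 1"
  unfolding V_unfold[OF assms] dist_Pair_Pair dist_real_def by simp

lemma V_neq_o: assumes "k > 0" shows "V k x \<noteq> (0,0)"
  using norm_V[OF assms, of x] by auto

lemma V_eq_iff: assumes k: "k > 0" and hk: "int k = 2*h"
  shows "V k x = V k y \<longleftrightarrow> (x - y) mod (2 * int k) = 0"
proof
  assume e: "V k x = V k y"
  show "(x - y) mod (2 * int k) = 0"
  proof (rule ccontr)
    assume "(x - y) mod (2 * int k) \<noteq> 0"
    then obtain m where "0 < prj k m y \<and> prj k m x < 0" using prj_sep[OF k hk, of x y] by blast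
    then show False using inner_V[OF k, of x m] inner_V[OF k, of y m] e by simp
  qed
next
  assume "(x - y) mod (2 * int k) = 0"
  then have "x mod (2 * int k) = y mod (2 * int k)" by (simp add: mod_eq_dvd_iff dvd_eq_mod_eq_0)
  then show "V k x = V k y" unfolding V_def by simp
qed

lemma polyv_V: assumes "i < 2 * k" shows "polyv k i = V k (int i)"
  using assms unfolding V_def by simp

lemma V_in_Sk: assumes "k > 0" shows "V k x \<in> Sk k"
proof -
  have "nat (x mod (2 * int k)) < 2 * k" using assms by (simp add: nat_less_iff)
  then show ?thesis unfolding Sk_def V_def by blast
qed

lemma Sk_cases: assumes "v \<in> Sk k" obtains "v = (0,0)" | x where "v = V k x"
  using assms unfolding Sk_def using polyv_V by blast



lemma is_path_iff: "is_path S E ps u v \<longleftrightarrow> ps \<noteq> [] \<and> hd ps = u \<and> last ps = v \<and> distinct ps \<and> set ps \<subseteq> S \<and> successively (\<lambda>a b. {a,b} \<in> E) ps"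
  by (simp add: is_path_def successively_conv_nth)

lemma is_path_rev: assumes "is_path S E ps u v" shows "is_path S E (rev ps) v u"
proof -
  have "successively (\<lambda>a b. {a,b} \<in> E) (rev ps)" using assms unfolding is_path_iff
    by (simp add: insert_commute)
  then show ?thesis using assms unfolding is_path_iff by (simp add: hd_rev last_rev)
qed

lemma is_path_join:
  assumes p: "is_path S E ps u w" and q: "is_path S E qs w v" and i: "set ps \<inter> set qs = {w}"
  shows "is_path S E (ps @ tl qs) u v"
proof -
  obtain qs' where qs: "qs = w # qs'" using q unfolding is_path_iff by (cases qs) auto
  have d: "distinct (w # qs')" using q qs unfolding is_path_iff by simp
  have dis: "set ps \<inter> set qs' = {}" using i d qs by auto
  have s1: "successively (\<lambda>a b. {a,b} \<in> E) ps" using p unfolding is_path_iff by simp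
  have s2: "successively (\<lambda>a b. {a,b} \<in> E) (w # qs')" using q qs unfolding is_path_iff by simp
  have lw: "last ps = w" "ps \<noteq> []" using p unfolding is_path_iff by auto
  have "successively (\<lambda>a b. {a,b} \<in> E) (ps @ qs')"
    using s1 s2 lw unfolding successively_append_iff by (auto simp: successively_Cons)
  moreover have "last (ps @ qs') = v"
  proof (cases "qs' = []")
    case True then show ?thesis using q qs lw unfolding is_path_iff by simp
  next
    case False then show ?thesis using q qs unfolding is_path_iff by simp
  qed
  ultimately show ?thesis using p q qs d dis unfolding is_path_iff by auto
qed

fun up :: "(pt \<Rightarrow> pt) \<Rightarrow> nat \<Rightarrow> pt \<Rightarrow> pt list" where
  "up f 0 v = [v]"
| "up f (Suc n) v = v # up f n (f v)"

locale MT =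
  fixes k :: nat and E :: "pt set set"
  assumes ev: "even k" and k2: "2 \<le> k" and sp: "spanning_tree (Sk k) E"
    and dm: "Dmonotone (dirs k) (Sk k) E"
begin

definition hh :: int where "hh = int k div 2"

lemma hk: "int k = 2 * hh" using ev unfolding hh_def by auto
lemma kpos: "k > 0" using k2 by simp
lemma hh1: "1 \<le> hh" using hk k2 by simp

definition wk :: "nat \<Rightarrow> pt \<Rightarrow> bool" where
  "wk n v \<longleftrightarrow> (\<exists>ps. length ps = Suc n \<and> hd ps = v \<and> last ps = (0,0) \<and> set ps \<subseteq> Sk k \<and> successively (\<lambda>a b. {a,b} \<in> E) ps)"

definition hgt :: "pt \<Rightarrow> nat" where "hgt v = (LEAST n. wk n v)"

definition par :: "pt \<Rightarrow> pt" where "par v = (SOME w. w \<in> Sk k \<and> {v, w} \<in> E \<and> Suc (hgt w) = hgt v)"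

definition rp :: "pt \<Rightarrow> pt list" where "rp v = up par (hgt v) v"

lemma o_in: "(0,0) \<in> Sk k" unfolding Sk_def by simp

lemma wk_ex: assumes "v \<in> Sk k" shows "\<exists>n. wk n v"
proof -
  obtain ps where "is_path (Sk k) E ps v (0,0)" using sp assms o_in unfolding spanning_tree_def by blast
  then have "wk (length ps - 1) v" unfolding wk_def is_path_iff by (intro exI[of _ ps]) auto
  then show ?thesis by blast
qed

lemma wk_hgt: assumes "v \<in> Sk k" shows "wk (hgt v) v"
  unfolding hgt_def using wk_ex[OF assms] by (rule LeastI_ex)

lemma hgt_le: "wk n v \<Longrightarrow> hgt v \<le> n" unfolding hgt_def by (rule Least_le)

lemma hgt0: assumes "v \<in> Sk k" shows "hgt v = 0 \<longleftrightarrow> v = (0,0)"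
proof
  assume "hgt v = 0"
  then obtain ps where "length ps = 1" "hd ps = v" "last ps = (0,0)" using wk_hgt[OF assms] unfolding wk_def by auto
  then show "v = (0,0)" by (cases ps) auto
next
  assume "v = (0,0)"
  then have "wk 0 v" unfolding wk_def using o_in by (intro exI[of _ "[v]"]) auto
  then show "hgt v = 0" using hgt_le by fastforce
qed

lemma par_ex: assumes v: "v \<in> Sk k" "v \<noteq> (0,0)"
  shows "\<exists>w. w \<in> Sk k \<and> {v, w} \<in> E \<and> Suc (hgt w) = hgt v"
proof -
  obtain ps where ps: "length ps = Suc (hgt v)" "hd ps = v" "last ps = (0,0)" "set ps \<subseteq> Sk k"
    "successively (\<lambda>a b. {a,b} \<in> E) ps" using wk_hgt[OF v(1)] unfolding wk_def by auto
  have h: "hgt v \<noteq> 0" using hgt0[OF v(1)] v(2) by simp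
  then obtain w ps' where ps2: "ps = v # w # ps'" using ps(1,2) by (cases ps; cases "tl ps") auto
  have w: "w \<in> Sk k" using ps(4) ps2 by auto
  have e: "{v, w} \<in> E" using ps(5) ps2 by simp
  have "wk (hgt v - 1) w" unfolding wk_def using ps ps2 by (intro exI[of _ "w # ps'"]) auto
  then have h1: "hgt w \<le> hgt v - 1" by (rule hgt_le)
  obtain qs where qs: "length qs = Suc (hgt w)" "hd qs = w" "last qs = (0,0)" "set qs \<subseteq> Sk k"
    "successively (\<lambda>a b. {a,b} \<in> E) qs" using wk_hgt[OF w] unfolding wk_def by auto
  have "qs \<noteq> []" using qs(1) by auto
  then have "wk (Suc (hgt w)) v" unfolding wk_def using qs v e
    by (intro exI[of _ "v # qs"]) (auto simp: successively_Cons)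
  then have "hgt v \<le> Suc (hgt w)" by (rule hgt_le)
  then show ?thesis using h1 h w e by (intro exI[of _ w]) auto
qed

lemma par: assumes "v \<in> Sk k" "v \<noteq> (0,0)"
  shows "par v \<in> Sk k" "{v, par v} \<in> E" "Suc (hgt (par v)) = hgt v"
  using someI_ex[OF par_ex[OF assms]] unfolding par_def by auto

lemma rp_o: "rp (0,0) = [(0,0)]" using hgt0[OF o_in] unfolding rp_def by simp

lemma rp_step: assumes "v \<in> Sk k" "v \<noteq> (0,0)" shows "rp v = v # rp (par v)"
  using par(3)[OF assms] unfolding rp_def by (metis up.simps(2))

lemma rp_props: assumes "v \<in> Sk k"
  shows "length (rp v) = Suc (hgt v) \<and> hd (rp v) = v \<and> last (rp v) = (0,0) \<and> set (rp v) \<subseteq> Sk k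
    \<and> successively (\<lambda>a b. {a,b} \<in> E) (rp v) \<and> (\<forall>i < length (rp v). hgt (rp v ! i) = hgt v - i)
    \<and> (\<forall>z \<in> set (rp v). z \<in> Sk k \<and> (\<exists>i. rp z = drop i (rp v)))"
  using assms
proof (induction "hgt v" arbitrary: v)
  case 0
  then have "v = (0,0)" using hgt0 by simp
  then show ?case using rp_o o_in hgt0[OF o_in] by (auto intro!: exI[of _ 0])
next
  case (Suc n)
  have v0: "v \<noteq> (0,0)" using Suc.hyps(2) hgt0[OF Suc.prems] by auto
  have pv: "par v \<in> Sk k" "{v, par v} \<in> E" "Suc (hgt (par v)) = hgt v" using par[OF Suc.prems v0] by auto
  have IH: "length (rp (par v)) = Suc (hgt (par v)) \<and> hd (rp (par v)) = par v \<and> last (rp (par v)) = (0,0) \<and> set (rp (par v)) \<subseteq> Sk k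
    \<and> successively (\<lambda>a b. {a,b} \<in> E) (rp (par v)) \<and> (\<forall>i < length (rp (par v)). hgt (rp (par v) ! i) = hgt (par v) - i)
    \<and> (\<forall>z \<in> set (rp (par v)). z \<in> Sk k \<and> (\<exists>i. rp z = drop i (rp (par v))))"
    using Suc.hyps(1)[of "par v"] Suc.hyps(2) pv by auto
  have r: "rp v = v # rp (par v)" using rp_step[OF Suc.prems v0] .
  have ne: "rp (par v) \<noteq> []" using IH by auto
  have A: "\<forall>i < length (rp v). hgt (rp v ! i) = hgt v - i"
  proof (intro allI impI)
    fix i assume "i < length (rp v)"
    then show "hgt (rp v ! i) = hgt v - i" using IH pv(3) unfolding r by (cases i) auto
  qed
  have B: "\<forall>z \<in> set (rp v). z \<in> Sk k \<and> (\<exists>i. rp z = drop i (rp v))"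
  proof
    fix z assume "z \<in> set (rp v)"
    then have "z = v \<or> z \<in> set (rp (par v))" unfolding r by auto
    then show "z \<in> Sk k \<and> (\<exists>i. rp z = drop i (rp v))"
    proof
      assume "z = v" then show ?thesis using Suc.prems by (intro conjI exI[of _ 0]) auto
    next
      assume "z \<in> set (rp (par v))"
      then obtain i where "rp z = drop i (rp (par v))" "z \<in> Sk k" using IH by blast
      then show ?thesis unfolding r by (intro conjI exI[of _ "Suc i"]) auto
    qed
  qed
  have l1: "length (rp v) = Suc (hgt v)" using IH pv(3) r by simp
  have l2: "hd (rp v) = v" using r by simp
  have l3: "last (rp v) = (0,0)" using IH r ne by simp
  have l4: "set (rp v) \<subseteq> Sk k" using IH r Suc.prems by simp
  have l5: "successively (\<lambda>a b. {a,b} \<in> E) (rp v)" unfolding r successively_Cons using IH pv(2) ne by simp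
  show ?case using l1 l2 l3 l4 l5 A B by blast
qed

lemma rp_len: "v \<in> Sk k \<Longrightarrow> length (rp v) = Suc (hgt v)" using rp_props by blast
lemma rp_hd: "v \<in> Sk k \<Longrightarrow> hd (rp v) = v" using rp_props by blast
lemma rp_last: "v \<in> Sk k \<Longrightarrow> last (rp v) = (0,0)" using rp_props by blast
lemma rp_set: "v \<in> Sk k \<Longrightarrow> set (rp v) \<subseteq> Sk k" using rp_props by blast
lemma rp_succ: "v \<in> Sk k \<Longrightarrow> successively (\<lambda>a b. {a,b} \<in> E) (rp v)" using rp_props by blast
lemma rp_hgt: "v \<in> Sk k \<Longrightarrow> i < length (rp v) \<Longrightarrow> hgt (rp v ! i) = hgt v - i" using rp_props by blast
lemma rp_suffix: "v \<in> Sk k \<Longrightarrow> z \<in> set (rp v) \<Longrightarrow> \<exists>i. rp z = drop i (rp v)" using rp_props by blast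

lemma rp_distinct: assumes "v \<in> Sk k" shows "distinct (rp v)"
proof -
  have "inj_on (\<lambda>i. rp v ! i) {..<length (rp v)}"
  proof (rule inj_onI)
    fix i j assume "i \<in> {..<length (rp v)}" "j \<in> {..<length (rp v)}" "rp v ! i = rp v ! j"
    then show "i = j" using rp_hgt[OF assms, of i] rp_hgt[OF assms, of j] rp_len[OF assms] by auto
  qed
  then show ?thesis unfolding distinct_conv_nth inj_on_def by blast
qed

lemma rp_path: assumes "v \<in> Sk k" shows "is_path (Sk k) E (rp v) v (0,0)"
  unfolding is_path_iff using rp_props[OF assms] rp_distinct[OF assms] by auto


lemma rp_nth_par: assumes "v \<in> Sk k" "Suc i < length (rp v)"
  shows "rp v ! Suc i = par (rp v ! i)"
  using assms
proof (induction i arbitrary: v)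
  case 0
  have v0: "v \<noteq> (0,0)" using 0 rp_len[OF 0(1)] hgt0[OF 0(1)] by auto
  have p: "par v \<in> Sk k" using par[OF 0(1) v0] by auto
  have ne: "rp (par v) \<noteq> []" using rp_len[OF p] by auto
  have "rp (par v) ! 0 = par v" using hd_conv_nth[OF ne] rp_hd[OF p] by simp
  then show ?case using rp_step[OF 0(1) v0] by simp
next
  case (Suc i)
  have v0: "v \<noteq> (0,0)" using Suc.prems rp_len[OF Suc.prems(1)] hgt0[OF Suc.prems(1)] by auto
  have p: "par v \<in> Sk k" using par[OF Suc.prems(1) v0] by auto
  have r: "rp v = v # rp (par v)" using rp_step[OF Suc.prems(1) v0] .
  have "Suc i < length (rp (par v))" using Suc.prems(2) unfolding r by simp
  then show ?case unfolding r using Suc.IH[OF p] by simp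
qed

lemma rp_nth: assumes "v \<in> Sk k" "Suc i < length (rp v)"
  shows "rp v ! i \<noteq> (0,0)" "rp v ! i \<in> Sk k" "{rp v ! i, rp v ! Suc i} \<in> E"
proof -
  show zS: "rp v ! i \<in> Sk k" using rp_set[OF assms(1)] assms(2) by auto
  have "hgt (rp v ! i) \<noteq> 0" using rp_hgt[OF assms(1), of i] assms rp_len[OF assms(1)] by auto
  then show "rp v ! i \<noteq> (0,0)" using hgt0[OF zS] by auto
  show "{rp v ! i, rp v ! Suc i} \<in> E" using successively_nth[OF rp_succ[OF assms(1)] assms(2)] .
qed

end


context MT begin

definition rt :: "pt \<Rightarrow> pt" where "rt v = rp v ! (hgt v - 1)"

lemma hgt_pos: assumes "v \<in> Sk k" "v \<noteq> (0,0)" shows "0 < hgt v" using hgt0[OF assms(1)] assms(2) by simp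

lemma rp_ne: "v \<in> Sk k \<Longrightarrow> rp v \<noteq> []" using rp_len[of v] by auto

lemma rp_0: "v \<in> Sk k \<Longrightarrow> rp v ! 0 = v" using hd_conv_nth[OF rp_ne, of v] rp_hd[of v] by simp

lemma rp_nth_last: "v \<in> Sk k \<Longrightarrow> rp v ! hgt v = (0,0)"
  using last_conv_nth[OF rp_ne, of v] rp_last[of v] rp_len[of v] by simp

lemma rt_props: assumes v: "v \<in> Sk k" "v \<noteq> (0,0)"
  shows "rt v \<in> set (rp v)" "rt v \<in> Sk k" "rt v \<noteq> (0,0)" "par (rt v) = (0,0)"
proof -
  have h: "Suc (hgt v - 1) = hgt v" using hgt_pos[OF v] by simp
  have l: "Suc (hgt v - 1) < length (rp v)" using h rp_len[OF v(1)] by simp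
  show "rt v \<in> set (rp v)" unfolding rt_def using l by simp
  show "rt v \<in> Sk k" "rt v \<noteq> (0,0)" unfolding rt_def using rp_nth[OF v(1) l] by auto
  have "rp v ! Suc (hgt v - 1) = par (rt v)" unfolding rt_def using rp_nth_par[OF v(1) l] .
  then show "par (rt v) = (0,0)" using h rp_nth_last[OF v(1)] by simp
qed

lemma rt_idx: assumes v: "v \<in> Sk k" "v \<noteq> (0,0)" and i: "i < hgt v"
  shows "rp v ! i \<noteq> (0,0)" "rp v ! i \<in> Sk k" "rt (rp v ! i) = rt v"
proof -
  have l: "Suc i < length (rp v)" using i rp_len[OF v(1)] by simp
  show z0: "rp v ! i \<noteq> (0,0)" and zS: "rp v ! i \<in> Sk k" using rp_nth[OF v(1) l] by auto
  obtain j where j: "rp (rp v ! i) = drop j (rp v)" using rp_suffix[OF v(1), of "rp v ! i"] l by auto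
  have hz: "hgt (rp v ! i) = hgt v - i" using rp_hgt[OF v(1), of i] l by simp
  have "length (drop j (rp v)) = Suc (hgt v - i)" using j rp_len[OF zS] hz by simp
  then have ji: "j = i" using rp_len[OF v(1)] i by simp
  have "rt (rp v ! i) = drop i (rp v) ! (hgt v - i - 1)" unfolding rt_def hz using j ji by simp
  also have "\<dots> = rp v ! (hgt v - 1)" using i l by (simp add: nth_drop)
  finally show "rt (rp v ! i) = rt v" unfolding rt_def .
qed

lemma rt_set: assumes v: "v \<in> Sk k" "v \<noteq> (0,0)" and z: "z \<in> set (rp v)" "z \<noteq> (0,0)"
  shows "rt z = rt v"
proof -
  obtain i where i: "i < length (rp v)" "z = rp v ! i" using z(1) by (metis in_set_conv_nth)
  have "i \<noteq> hgt v" using z(2) i rp_nth_last[OF v(1)] by auto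
  then have "i < hgt v" using i rp_len[OF v(1)] by simp
  then show ?thesis using rt_idx[OF v] i by simp
qed

lemma rt_root: assumes v: "v \<in> Sk k" "v \<noteq> (0,0)" and p: "par v = (0,0)" shows "rt v = v"
proof -
  have "hgt v = 1" using par(3)[OF v] p hgt0[OF o_in] by simp
  then show ?thesis unfolding rt_def using rp_0[OF v(1)] by simp
qed

lemma rt_rt: assumes v: "v \<in> Sk k" "v \<noteq> (0,0)" shows "rt (rt v) = rt v"
  using rt_root[OF rt_props(2,3)[OF v] rt_props(4)[OF v]] .


lemma cross_inter: assumes x: "x \<in> Sk k" "x \<noteq> (0,0)" and w: "w \<in> Sk k" "w \<noteq> (0,0)" and r: "rt x \<noteq> rt w"
  shows "set (rp x) \<inter> set (rp w) = {(0,0)}"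
proof -
  have "(0,0) \<in> set (rp x)" "(0,0) \<in> set (rp w)"
    using last_in_set[OF rp_ne[OF x(1)]] last_in_set[OF rp_ne[OF w(1)]] rp_last[OF x(1)] rp_last[OF w(1)] by simp_all
  moreover have "z = (0,0)" if "z \<in> set (rp x)" "z \<in> set (rp w)" for z
  proof (rule ccontr)
    assume z: "z \<noteq> (0,0)"
    have "rt z = rt x" by (rule rt_set[OF x that(1) z])
    moreover have "rt z = rt w" by (rule rt_set[OF w that(2) z])
    ultimately show False using r by simp
  qed
  ultimately show ?thesis by blast
qed

lemma dm_path: assumes p: "is_path (Sk k) E ps u v"
  shows "\<exists>m. \<forall>i j. i < j \<longrightarrow> j < length ps \<longrightarrow> inner (ps!i) (dir k m) < inner (ps!j) (dir k m)"
proof -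
  have ne: "ps \<noteq> []" and hu: "hd ps = u" and lv: "last ps = v" and ss: "set ps \<subseteq> Sk k"
    using p unfolding is_path_iff by auto
  have u: "u \<in> Sk k" using hd_in_set[OF ne] hu ss by auto
  have v: "v \<in> Sk k" using last_in_set[OF ne] lv ss by auto
  obtain d where d: "d \<in> dirs k" and md: "\<forall>ps. is_path (Sk k) E ps u v \<longrightarrow> monotone_path d ps"
    using dm u v unfolding Dmonotone_def by blast
  have "monotone_path d ps" using md p by simp
  then show ?thesis by (rule mono_extract[OF kpos d])
qed

lemma root_chain: assumes x: "x \<in> Sk k" "x \<noteq> (0,0)" "x \<noteq> rt x"
  shows "\<exists>m. inner x (dir k m) < inner (rt x) (dir k m) \<and> inner (rt x) (dir k m) < 0"
proof -
  obtain m where m: "\<forall>i j. i < j \<longrightarrow> j < length (rp x) \<longrightarrow> inner (rp x!i) (dir k m) < inner (rp x!j) (dir k m)"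
    using dm_path[OF rp_path[OF x(1)]] by blast
  have h: "hgt x - 1 \<noteq> 0"
  proof
    assume "hgt x - 1 = 0" then have "rt x = x" unfolding rt_def using rp_0[OF x(1)] by simp
    then show False using x(3) by simp
  qed
  have "inner (rp x ! 0) (dir k m) < inner (rp x ! (hgt x - 1)) (dir k m)"
    using m h rp_len[OF x(1)] by auto
  moreover have "inner (rp x ! (hgt x - 1)) (dir k m) < inner (rp x ! hgt x) (dir k m)"
    using m h rp_len[OF x(1)] by auto
  ultimately show ?thesis unfolding rt_def[symmetric] rp_0[OF x(1)] rp_nth_last[OF x(1)] inner_o by blast
qed

lemma cross_chain: assumes x: "x \<in> Sk k" "x \<noteq> (0,0)" "x \<noteq> rt x" and w: "w \<in> Sk k" "w \<noteq> (0,0)"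
  and r: "rt x \<noteq> rt w"
  shows "\<exists>m. inner x (dir k m) < inner (rt x) (dir k m) \<and> inner (rt x) (dir k m) < 0 \<and> 0 < inner w (dir k m)
     \<and> (\<forall>i j. i < j \<longrightarrow> j < hgt x \<longrightarrow> inner (rp x ! i) (dir k m) < inner (rp x ! j) (dir k m))"
proof -
  define L where "L = rp x @ tl (rev (rp w))"
  have pL: "is_path (Sk k) E L x w" unfolding L_def
    by (rule is_path_join[OF rp_path[OF x(1)] is_path_rev[OF rp_path[OF w(1)]]]) (use cross_inter[OF x(1,2) w r] in auto)
  obtain m where m: "\<forall>i j. i < j \<longrightarrow> j < length L \<longrightarrow> inner (L!i) (dir k m) < inner (L!j) (dir k m)"
    using dm_path[OF pL] by blast
  have lx: "length (rp x) = Suc (hgt x)" using rp_len[OF x(1)] .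
  have lw: "length (rp w) = Suc (hgt w)" using rp_len[OF w(1)] .
  have hw: "0 < hgt w" using hgt_pos[OF w] .
  have lL: "length L = Suc (hgt x) + hgt w" unfolding L_def using lx lw by simp
  have Li: "L ! i = rp x ! i" if "i < Suc (hgt x)" for i unfolding L_def using that lx by (simp add: nth_append)
  have Ll: "L ! (length L - 1) = w"
    using pL unfolding is_path_iff using last_conv_nth[of L] by simp
  have h: "hgt x - 1 \<noteq> 0"
  proof
    assume "hgt x - 1 = 0" then have "rt x = x" unfolding rt_def using rp_0[OF x(1)] by simp
    then show False using x(3) by simp
  qed
  have x0: "rp x ! 0 = x" using rp_0[OF x(1)] .
  have a1: "inner x (dir k m) < inner (rt x) (dir k m)"
    using m[rule_format, of 0 "hgt x - 1"] h lL Li[of 0] Li[of "hgt x - 1"] x0 unfolding rt_def by auto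
  have a2: "inner (rt x) (dir k m) < 0"
    using m[rule_format, of "hgt x - 1" "hgt x"] h lL Li[of "hgt x"] Li[of "hgt x - 1"] rp_nth_last[OF x(1)]
    unfolding rt_def by (auto simp: inner_o)
  have a3: "0 < inner w (dir k m)"
    using m[rule_format, of "hgt x" "length L - 1"] hw lL Li[of "hgt x"] rp_nth_last[OF x(1)] Ll
    by (auto simp: inner_o)
  have a4: "\<forall>i j. i < j \<longrightarrow> j < hgt x \<longrightarrow> inner (rp x ! i) (dir k m) < inner (rp x ! j) (dir k m)"
  proof (intro allI impI)
    fix i j :: nat assume ij: "i < j" "j < hgt x"
    have "inner (L!i) (dir k m) < inner (L!j) (dir k m)" using m ij lL by simp
    then show "inner (rp x ! i) (dir k m) < inner (rp x ! j) (dir k m)" using Li[of i] Li[of j] ij by simp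
  qed
  show ?thesis using a1 a2 a3 a4 by blast
qed

end


definition sd :: "nat \<Rightarrow> int" where
  "sd n = (if odd n then int ((n - 1) div 2) else - int (n div 2))"

lemma sd_even: "sd (2*r) = - int r" unfolding sd_def by simp
lemma sd_odd: "sd (Suc (2*r)) = int r" unfolding sd_def by simp

lemma nat_par_cases: obtains r where "n = 2*r" | r where "n = Suc (2*r)"
proof (cases "even n")
  case True then show ?thesis using that(1) by (blast elim: evenE)
next
  case False then obtain r where "n = 2*r + 1" by (blast elim: oddE)
  then show ?thesis using that(2) by simp
qed

lemma sd_range: assumes "1 \<le> n" "n \<le> k" "int k = 2*h" shows "-h \<le> sd n \<and> sd n \<le> h - 1"
proof (cases n rule: nat_par_cases)
  case (1 r) then show ?thesis using assms by (simp add: sd_even)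
next
  case (2 r) then show ?thesis using assms by (simp add: sd_odd)
qed

lemma sd_surj: assumes "-h \<le> d" "d \<le> h - 1" "int k = 2*h" shows "\<exists>n. 1 \<le> n \<and> n \<le> k \<and> sd n = d"
proof (cases "0 \<le> d")
  case True
  have "sd (Suc (2 * nat d)) = d" using True by (simp add: sd_odd)
  moreover have "Suc (2 * nat d) \<le> k" using True assms by linarith
  ultimately show ?thesis by (intro exI[of _ "Suc (2 * nat d)"]) simp
next
  case False
  have "sd (2 * nat (-d)) = d" using False by (simp add: sd_even)
  moreover have "2 * nat (-d) \<le> k" "1 \<le> 2 * nat (-d)" using False assms by linarith+
  ultimately show ?thesis by (intro exI[of _ "2 * nat (-d)"]) simp
qed

lemma sd_mono: assumes "1 \<le> a" "a < b" shows "abs (3 * sd a + 1) < abs (3 * sd b + 1)"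
proof (cases a rule: nat_par_cases)
  case (1 r)
  then show ?thesis
  proof (cases b rule: nat_par_cases)
    case (1 q) then show ?thesis using assms \<open>a = 2*r\<close> by (simp add: sd_even)
  next
    case (2 q) then show ?thesis using assms \<open>a = 2*r\<close> by (simp add: sd_even sd_odd)
  qed
next
  case (2 r)
  then show ?thesis
  proof (cases b rule: nat_par_cases)
    case (1 q) then show ?thesis using assms \<open>a = Suc (2*r)\<close> by (simp add: sd_even sd_odd)
  next
    case (2 q) then show ?thesis using assms \<open>a = Suc (2*r)\<close> by (simp add: sd_odd)
  qed
qed

lemma sd_gap: assumes "1 \<le> n" shows "abs (sd (Suc n) - sd n) = int n"
proof (cases n rule: nat_par_cases)
  case (1 r)
  then show ?thesis using assms by (simp add: sd_even sd_odd)
next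
  case (2 r)
  then have "Suc n = 2 * Suc r" by simp
  then show ?thesis using \<open>n = Suc (2*r)\<close> by (simp only: sd_even sd_odd)
qed

lemma sd_kk: assumes "int k = 2*h" shows "sd k = -h"
proof -
  have "k = 2 * nat h" using assms by simp
  then show ?thesis using assms by (simp add: sd_even)
qed

lemma sin_cos_gt1: assumes "0 < x" "x < pi/2" shows "1 < sin x + cos x"
proof -
  have s: "0 < sin x" using assms by (intro sin_gt_zero) auto
  have c: "0 < cos x" using assms by (intro cos_gt_zero_pi) auto
  have "(sin x + cos x)^2 = 1 + 2 * sin x * cos x" using sin_cos_squared_add[of x] by (simp add: power2_sum)
  then have sq: "1 < (sin x + cos x)^2" using s c by simp
  show ?thesis
  proof (rule ccontr)
    assume "\<not> 1 < sin x + cos x"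
    then have "(sin x + cos x)^2 \<le> 1" using s c by (intro power_le_one) auto
    then show False using sq by simp
  qed
qed

lemma trig_sum: assumes k: "2 \<le> k"
  shows "real k - 1 < (\<Sum>n\<in>{1..k-1}. 2 * sin (real n * pi / (2 * real k)))"
proof -
  define f where "f n = sin (real n * pi / (2 * real k))" for n :: nat
  define g where "g n = cos (real n * pi / (2 * real k))" for n :: nat
  have x: "0 < real n * pi / (2 * real k)" "real n * pi / (2 * real k) < pi/2" if "n \<in> {1..k-1}" for n
  proof -
    show "0 < real n * pi / (2 * real k)" using that k by auto
    have "real n < real k" using that k by auto
    then have "real n * pi < real k * pi" by simp
    then show "real n * pi / (2 * real k) < pi/2" using k by (simp add: divide_less_eq field_simps)
  qed
  have fg: "f (k - n) = g n" if "n \<in> {1..k-1}" for n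
  proof -
    have r: "real (k - n) = real k - real n" using that by (intro of_nat_diff) auto
    have "real (k - n) * pi / (2 * real k) = pi/2 - real n * pi / (2 * real k)"
      unfolding r using k by (simp add: field_simps)
    then show ?thesis unfolding f_def g_def by (simp add: sin_cos_eq)
  qed
  have "sum f {1..k-1} = sum (\<lambda>n. f (k - 1 + 1 - n)) {1..k-1}" by (rule sum.atLeastAtMost_rev)
  also have "\<dots> = sum g {1..k-1}" using fg k by (intro sum.cong) auto
  finally have e: "sum f {1..k-1} = sum g {1..k-1}" .
  have lt: "2 < 2 * (f n + g n)" if "n \<in> {1..k-1}" for n
    using sin_cos_gt1[OF x[OF that]] unfolding f_def g_def by simp
  have "(\<Sum>n\<in>{1..k-1}. (2::real)) < (\<Sum>n\<in>{1..k-1}. 2 * (f n + g n))"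
    using k lt by (intro sum_strict_mono) auto
  also have "\<dots> = 2 * (\<Sum>n\<in>{1..k-1}. 2 * f n)"
  proof -
    have "(\<Sum>n\<in>{1..k-1}. 2 * (f n + g n)) = 2 * sum f {1..k-1} + 2 * sum g {1..k-1}"
      by (simp add: sum.distrib sum_distrib_left algebra_simps)
    also have "\<dots> = 2 * (2 * sum f {1..k-1})" using e by simp
    also have "\<dots> = 2 * (\<Sum>n\<in>{1..k-1}. 2 * f n)" by (simp add: sum_distrib_left)
    finally show ?thesis .
  qed
  finally have "2 * (real k - 1) < 2 * (\<Sum>n\<in>{1..k-1}. 2 * f n)" using k by (simp add: of_nat_diff)
  then show ?thesis unfolding f_def by simp
qed



locale MTC = MT + fixes ci :: int assumes croot: "par (V k ci) = (0,0)"
begin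

definition Cc :: "pt set" where "Cc = {v \<in> Sk k. v \<noteq> (0,0) \<and> rt v = V k ci}"

lemma c_S: "V k ci \<in> Sk k" using V_in_Sk[OF kpos] .
lemma c_ne: "V k ci \<noteq> (0,0)" using V_neq_o[OF kpos] .
lemma c_rt: "rt (V k ci) = V k ci" using rt_root[OF c_S c_ne croot] .
lemma c_C: "V k ci \<in> Cc" unfolding Cc_def using c_S c_ne c_rt by simp
lemma Veq: "V k x = V k y \<longleftrightarrow> (x - y) mod (2 * int k) = 0" using V_eq_iff[OF kpos hk] .
lemma iV: "inner (V k x) (dir k m) = prj k m x" using inner_V[OF kpos] .
lemma VS: "V k x \<in> Sk k" using V_in_Sk[OF kpos] .
lemma V0: "V k x \<noteq> (0,0)" using V_neq_o[OF kpos] .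

lemma notC: "V k x \<notin> Cc \<Longrightarrow> rt (V k x) \<noteq> V k ci" unfolding Cc_def using VS V0 by auto

lemma Vne_c: assumes "1 \<le> j" "j < 2 * int k" shows "V k (ci + j) \<noteq> V k ci"
  using assms unfolding Veq by simp

lemma Vne_c': assumes "1 \<le> j" "j < 2 * int k" shows "V k (ci - j) \<noteq> V k ci"
  unfolding Veq using assms by (simp add: zmod_zminus1_eq_if)

lemma pos_excl: assumes j: "1 \<le> j" "j \<le> int k" shows "V k (ci + j) \<notin> Cc"
proof
  assume jC: "V k (ci + j) \<in> Cc"
  define P where "P = {j. 1 \<le> j \<and> j \<le> int k \<and> V k (ci + j) \<in> Cc}"
  have fin: "finite P" unfolding P_def by (rule finite_subset[of _ "{1..int k}"]) auto
  have jP: "j \<in> P" unfolding P_def using j jC by simp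
  define J where "J = Max P"
  have JP: "J \<in> P" unfolding J_def using Max_in[OF fin] jP by blast
  have Jmax: "\<And>i. i \<in> P \<Longrightarrow> i \<le> J" unfolding J_def using Max_ge[OF fin] by blast
  have J1: "1 \<le> J" "J \<le> int k" "V k (ci + J) \<in> Cc" using JP unfolding P_def by auto
  have yrt: "rt (V k (ci + J)) = V k ci" using J1(3) unfolding Cc_def by simp
  have yne: "V k (ci + J) \<noteq> rt (V k (ci + J))" unfolding yrt using Vne_c[of J] J1 kpos by simp
  show False
  proof (cases "int k - 1 \<le> J")
    case True
    obtain m where "inner (V k (ci + J)) (dir k m) < inner (rt (V k (ci + J))) (dir k m) \<and> inner (rt (V k (ci + J))) (dir k m) < 0"
      using root_chain[OF VS V0 yne] by blast
    then have "prj k m (ci + J) < prj k m ci \<and> prj k m ci < 0" unfolding yrt iV .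
    moreover have "\<not> (prj k m (ci + J) < prj k m (ci + 0) \<and> prj k m (ci + 0) < 0)"
      by (rule cfg_CA[OF kpos hk True J1(2) refl refl])
    ultimately show False by simp
  next
    case False
    have wn: "V k (ci + (J + 1)) \<notin> Cc"
    proof
      assume "V k (ci + (J + 1)) \<in> Cc"
      then have "J + 1 \<in> P" unfolding P_def using J1 False by simp
      then show False using Jmax by fastforce
    qed
    have rw: "rt (V k (ci + J)) \<noteq> rt (V k (ci + (J + 1)))" using notC[OF wn] unfolding yrt by simp
    obtain m where "inner (V k (ci + J)) (dir k m) < inner (rt (V k (ci + J))) (dir k m) \<and> inner (rt (V k (ci + J))) (dir k m) < 0
        \<and> 0 < inner (V k (ci + (J + 1))) (dir k m)"
      using cross_chain[OF VS V0 yne VS V0 rw] by blast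
    then have "prj k m (ci + J) < prj k m ci \<and> prj k m ci < 0 \<and> 0 < prj k m (ci + (J + 1))" unfolding yrt iV .
    moreover have "\<not> (prj k m (ci + J) < prj k m (ci + 0) \<and> prj k m (ci + 0) < 0 \<and> 0 < prj k m (ci + (J + 1)))"
      by (rule cfg_CB[OF kpos hk J1(1) _ refl refl refl]) (use False in simp)
    ultimately show False by simp
  qed
qed

lemma comp_a: assumes v: "v \<in> Cc" shows "\<exists>j. 0 \<le> j \<and> j \<le> int k - 1 \<and> v = V k (ci - j)"
proof -
  have vS: "v \<in> Sk k" "v \<noteq> (0,0)" using v unfolding Cc_def by auto
  obtain x where x: "v = V k x" using vS by (cases rule: Sk_cases) auto
  define g where "g = (x - ci) mod (2 * int k)"
  define q where "q = (x - ci) div (2 * int k)"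
  have g: "0 \<le> g" "g < 2 * int k" unfolding g_def using kpos by auto
  have xq: "x = ci + g + 2 * int k * q" unfolding g_def q_def by simp
  have vg: "v = V k (ci + g)" unfolding x Veq using xq by simp
  consider "g = 0" | "1 \<le> g \<and> g \<le> int k" | "int k + 1 \<le> g" using g by linarith
  then show ?thesis
  proof cases
    case 1 then show ?thesis using vg kpos by (intro exI[of _ 0]) simp
  next
    case 2 then show ?thesis using pos_excl[of g] vg v by simp
  next
    case 3
    have "V k (ci - (2 * int k - g)) = V k (ci + g)" unfolding Veq by simp
    then show ?thesis using 3 g vg by (intro exI[of _ "2 * int k - g"]) simp
  qed
qed

lemma neg_step: assumes j: "1 \<le> j" "j \<le> int k - 2" and yC: "V k (ci - j) \<in> Cc"
  shows "V k (ci - (j + 1)) \<in> Cc"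
proof (rule ccontr)
  assume wn: "V k (ci - (j + 1)) \<notin> Cc"
  have yrt: "rt (V k (ci - j)) = V k ci" using yC unfolding Cc_def by simp
  have yne: "V k (ci - j) \<noteq> rt (V k (ci - j))" unfolding yrt using Vne_c'[of j] j by simp
  have rw: "rt (V k (ci - j)) \<noteq> rt (V k (ci - (j + 1)))" using notC[OF wn] unfolding yrt by simp
  obtain m where "inner (V k (ci - j)) (dir k m) < inner (rt (V k (ci - j))) (dir k m) \<and> inner (rt (V k (ci - j))) (dir k m) < 0
      \<and> 0 < inner (V k (ci - (j + 1))) (dir k m)"
    using cross_chain[OF VS V0 yne VS V0 rw] by blast
  then have "prj k m (ci - j) < prj k m ci \<and> prj k m ci < 0 \<and> 0 < prj k m (ci - (j + 1))" unfolding yrt iV .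
  moreover have "\<not> (prj k m (ci + - j) < prj k m (ci + 0) \<and> prj k m (ci + 0) < 0 \<and> 0 < prj k m (ci + (- j - 1)))"
    by (rule cfg_CC[OF kpos hk j refl refl refl])
  ultimately show False by (simp add: algebra_simps)
qed

lemma far_C: assumes ne: "Cc \<noteq> {V k ci}" shows "V k (ci - (int k - 1)) \<in> Cc"
proof -
  obtain v where v: "v \<in> Cc" "v \<noteq> V k ci" using ne c_C by blast
  obtain j0 where j0: "0 \<le> j0" "j0 \<le> int k - 1" "v = V k (ci - j0)" using comp_a[OF v(1)] by blast
  have j01: "1 \<le> j0" using j0 v(2) kpos by (cases "j0 = 0") auto
  define Q where "Q = {j. 1 \<le> j \<and> j \<le> int k - 1 \<and> V k (ci - j) \<in> Cc}"
  have fin: "finite Q" unfolding Q_def by (rule finite_subset[of _ "{1..int k}"]) auto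
  have jQ: "j0 \<in> Q" unfolding Q_def using j0 j01 v by simp
  define J where "J = Max Q"
  have JQ: "J \<in> Q" unfolding J_def using Max_in[OF fin] jQ by blast
  have Jmax: "\<And>i. i \<in> Q \<Longrightarrow> i \<le> J" unfolding J_def using Max_ge[OF fin] by blast
  have J1: "1 \<le> J" "J \<le> int k - 1" "V k (ci - J) \<in> Cc" using JQ unfolding Q_def by auto
  have "J = int k - 1"
  proof (rule ccontr)
    assume "J \<noteq> int k - 1"
    then have "J \<le> int k - 2" using J1 by simp
    then have "V k (ci - (J + 1)) \<in> Cc" using neg_step J1 by simp
    then have "J + 1 \<in> Q" unfolding Q_def using J1 \<open>J \<le> int k - 2\<close> by simp
    then show False using Jmax by fastforce
  qed
  then show ?thesis using J1 by simp
qed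

lemma comp_b: assumes ne: "Cc \<noteq> {V k ci}" and j: "0 \<le> j" "j \<le> int k - 1" shows "V k (ci - j) \<in> Cc"
proof -
  consider "j = 0" | "j = int k - 1" | "1 \<le> j \<and> j \<le> int k - 2" using j by linarith
  then show ?thesis
  proof cases
    case 1 then show ?thesis using c_C by simp
  next
    case 2 then show ?thesis using far_C[OF ne] by simp
  next
    case 3
    show ?thesis
    proof (rule ccontr)
      assume wn: "V k (ci - j) \<notin> Cc"
      define y where "y = V k (ci - (int k - 1))"
      have yC: "y \<in> Cc" unfolding y_def using far_C[OF ne] .
      have yrt: "rt y = V k ci" using yC unfolding Cc_def by simp
      have yne0: "y \<noteq> V k ci" unfolding y_def using Vne_c'[of "int k - 1"] kpos k2 by simp
      have yne: "y \<noteq> rt y" using yne0 yrt by simp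
      have rw: "rt y \<noteq> rt (V k (ci - j))" using notC[OF wn] unfolding yrt by simp
      obtain m where "inner y (dir k m) < inner (rt y) (dir k m) \<and> inner (rt y) (dir k m) < 0
          \<and> 0 < inner (V k (ci - j)) (dir k m)"
        using cross_chain[OF _ _ yne VS V0 rw] yC unfolding Cc_def by blast
      then have "inner y (dir k m) < inner (V k ci) (dir k m) \<and> inner (V k ci) (dir k m) < 0
          \<and> 0 < inner (V k (ci - j)) (dir k m)" unfolding yrt .
      then have "prj k m (ci - (int k - 1)) < prj k m ci \<and> prj k m ci < 0 \<and> 0 < prj k m (ci - j)" unfolding y_def iV .
      moreover have "\<not> (prj k m (ci + - (int k - 1)) < prj k m (ci + 0) \<and> prj k m (ci + 0) < 0 \<and> 0 < prj k m (ci + (- j)))"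
        using 3 by (intro cfg_CE[OF kpos hk _ _ refl refl refl]) auto
      ultimately show False by (simp add: algebra_simps)
    qed
  qed
qed

lemma comp_heap: assumes ne: "Cc \<noteq> {V k ci}" and y: "y \<in> Cc" "y \<noteq> V k ci"
  shows "\<exists>m. (\<forall>x. prj k m x = - cc k (3*(x - ci) + 3*hh - 1))
      \<and> (\<forall>i j. i < j \<longrightarrow> j < hgt y \<longrightarrow> inner (rp y ! i) (dir k m) < inner (rp y ! j) (dir k m))"
proof -
  obtain j where j: "0 \<le> j" "j \<le> int k - 1" "y = V k (ci - j)" using comp_a[OF y(1)] by blast
  have j1: "1 \<le> j" using j y(2) kpos by (cases "j = 0") auto
  have wn: "V k (ci + 1) \<notin> Cc"
  proof
    assume "V k (ci + 1) \<in> Cc"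
    then obtain i where i: "0 \<le> i" "i \<le> int k - 1" "V k (ci + 1) = V k (ci - i)" using comp_a by blast
    then have "(1 + i) mod (2 * int k) = 0" unfolding Veq by (simp add: algebra_simps)
    moreover have "(1 + i) mod (2 * int k) = 1 + i" using i kpos by simp
    ultimately show False using i by simp
  qed
  have yrt: "rt y = V k ci" using y(1) unfolding Cc_def by simp
  have yne: "y \<noteq> rt y" unfolding yrt using y(2) .
  have rw: "rt y \<noteq> rt (V k (ci + 1))" using notC[OF wn] unfolding yrt by simp
  have yS: "y \<in> Sk k" "y \<noteq> (0,0)" using y(1) unfolding Cc_def by auto
  obtain m where m: "inner y (dir k m) < inner (rt y) (dir k m) \<and> inner (rt y) (dir k m) < 0
      \<and> 0 < inner (V k (ci + 1)) (dir k m)"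
      "\<forall>i j. i < j \<longrightarrow> j < hgt y \<longrightarrow> inner (rp y ! i) (dir k m) < inner (rp y ! j) (dir k m)"
    using cross_chain[OF yS yne VS V0 rw] by blast
  have m1: "inner y (dir k m) < inner (V k ci) (dir k m) \<and> inner (V k ci) (dir k m) < 0
      \<and> 0 < inner (V k (ci + 1)) (dir k m)" using m(1) unfolding yrt .
  have H: "prj k m (ci + - j) < prj k m (ci + 0) \<and> prj k m (ci + 0) < 0 \<and> 0 < prj k m (ci + 1)"
    using m1 unfolding j(3) iV by simp
  have "\<forall>x. prj k m x = - cc k (3*(x - ci) + 3*hh - 1)"
    using cfg_CD[OF kpos hk j1 j(2) refl refl refl H] by blast
  then show ?thesis using m(2) by blast
qed

end


context MTC begin

definition X :: "nat \<Rightarrow> int" where "X q = ci - hh - sd q"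
definition s :: "nat \<Rightarrow> pt" where "s q = V k (X q)"

lemma is_s: "inner (s q) (dir k m) = prj k m (X q)" unfolding s_def using iV .

lemma sdE: "sd (2*r) = - int r" "sd (Suc (2*r)) = int r" using sd_even sd_odd by auto

lemma sdE3: "sd (Suc (Suc (2*r))) = - int r - 1"
proof -
  have "Suc (Suc (2*r)) = 2 * Suc r" by simp
  then show ?thesis using sd_even[of "Suc r"] by simp
qed

lemma K1u: assumes "3 \<le> k" shows "\<not> (prj k m (X 1) < prj k m (X 3) \<and> prj k m (X 3) < prj k m (X 2))"
proof -
  have h2: "2 \<le> hh" using assms hk ev by (auto elim!: evenE)
  have "sd 1 = 0" "sd 3 = 1" "sd 2 = -1" unfolding sd_def by auto
  then show ?thesis unfolding X_def using cfg_K1[OF kpos hk h2, of "ci - hh - 0" ci "ci - hh - 1" "ci - hh - (-1)" m] by simp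
qed

lemma K2u: assumes "3 \<le> n" "n \<le> k - 1"
  shows "\<not> (prj k m (X (n-2)) < prj k m (X (n+1)) \<and> prj k m (X (n+1)) < prj k m (X n))"
proof (cases n rule: nat_par_cases)
  case (1 r)
  have r: "2 \<le> int r" "int r \<le> hh - 1" using assms 1 hk by auto
  have e: "n - 2 = 2*(r-1)" "n + 1 = Suc (2*r)" using 1 assms by auto
  have sdf1: "sd (n-2) = -(int r - 1)" using e r by (simp add: sdE sdE3 of_nat_diff)
  have sdf2: "sd (n+1) = int r" using e r by (simp add: sdE sdE3 of_nat_diff)
  have sdf3: "sd n = - int r" using e r by (simp add: sdE sdE3 of_nat_diff)
  show ?thesis unfolding X_def using sdf1 sdf2 sdf3
    using cfg_K2e[OF kpos hk r, of "ci - hh - (-(int r - 1))" ci "ci - hh - int r" "ci - hh - (- int r)" m] by simp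
next
  case (2 r)
  have r: "1 \<le> int r" "int r \<le> hh - 1" using assms 2 hk by auto
  have e: "n - 2 = Suc (2*(r-1))" "n + 1 = 2*(Suc r)" using 2 assms by auto
  have sdf4: "sd (n-2) = int r - 1" using e r by (simp add: sdE sdE3 of_nat_diff)
  have sdf5: "sd (n+1) = -(int r + 1)" using e r by (simp add: sdE sdE3 of_nat_diff)
  have sdf6: "sd n = int r" using e r by (simp add: sdE sdE3 of_nat_diff)
  show ?thesis unfolding X_def using sdf4 sdf5 sdf6
    using cfg_K2o[OF kpos hk r, of "ci - hh - (int r - 1)" ci "ci - hh - (-(int r + 1))" "ci - hh - int r" m] by simp
qed

lemma K3u: assumes "3 \<le> n" "n \<le> k - 1"
  shows "\<not> (prj k m (X (n-2)) < prj k m (X n) \<and> prj k m (X n) < prj k m (X (n+1)) \<and> prj k m (X (n+1)) < prj k m (X (n-1)))"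
proof (cases n rule: nat_par_cases)
  case (1 r)
  have r: "2 \<le> int r" "int r \<le> hh - 1" using assms 1 hk by auto
  have e: "n - 2 = 2*(r-1)" "n + 1 = Suc (2*r)" "n - 1 = Suc (2*(r-1))" using 1 assms by auto
  have sdf7: "sd (n-2) = -(int r - 1)" using e r by (simp add: sdE sdE3 of_nat_diff)
  have sdf8: "sd (n+1) = int r" using e r by (simp add: sdE sdE3 of_nat_diff)
  have sdf9: "sd n = - int r" using e r by (simp add: sdE sdE3 of_nat_diff)
  have sdf10: "sd (n-1) = int r - 1" using e r by (simp add: sdE sdE3 of_nat_diff)
  show ?thesis unfolding X_def using sdf7 sdf8 sdf9 sdf10
    using cfg_K3e[OF kpos hk r, of "ci - hh - (-(int r - 1))" ci "ci - hh - (- int r)" "ci - hh - int r" "ci - hh - (int r - 1)" m] by simp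
next
  case (2 r)
  have r: "1 \<le> int r" "int r \<le> hh - 1" using assms 2 hk by auto
  have e: "n - 2 = Suc (2*(r-1))" "n + 1 = 2*(Suc r)" "n - 1 = 2*r" using 2 assms by auto
  have sdf11: "sd (n-2) = int r - 1" using e r by (simp add: sdE sdE3 of_nat_diff)
  have sdf12: "sd (n+1) = -(int r + 1)" using e r by (simp add: sdE sdE3 of_nat_diff)
  have sdf13: "sd n = int r" using e r by (simp add: sdE sdE3 of_nat_diff)
  have sdf14: "sd (n-1) = - int r" using e r by (simp add: sdE sdE3 of_nat_diff)
  show ?thesis unfolding X_def using sdf11 sdf12 sdf13 sdf14
    using cfg_K3o[OF kpos hk r, of "ci - hh - (int r - 1)" ci "ci - hh - int r" "ci - hh - (-(int r + 1))" "ci - hh - (- int r)" m] by simp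
qed

lemma K4u: assumes "3 \<le> n" "n \<le> k - 1"
  shows "\<not> (prj k m (X (n-2)) < prj k m (X (n-1)) \<and> prj k m (X (n-1)) < prj k m (X (n+1)) \<and> prj k m (X (n+1)) < prj k m (X n))"
proof (cases n rule: nat_par_cases)
  case (1 r)
  have r: "2 \<le> int r" "int r \<le> hh - 1" using assms 1 hk by auto
  have e: "n - 2 = 2*(r-1)" "n + 1 = Suc (2*r)" "n - 1 = Suc (2*(r-1))" using 1 assms by auto
  have sdf15: "sd (n-2) = -(int r - 1)" using e r by (simp add: sdE sdE3 of_nat_diff)
  have sdf16: "sd (n+1) = int r" using e r by (simp add: sdE sdE3 of_nat_diff)
  have sdf17: "sd n = - int r" using e r by (simp add: sdE sdE3 of_nat_diff)
  have sdf18: "sd (n-1) = int r - 1" using e r by (simp add: sdE sdE3 of_nat_diff)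
  show ?thesis unfolding X_def using sdf15 sdf16 sdf17 sdf18
    using cfg_K4e[OF kpos hk r, of "ci - hh - (-(int r - 1))" ci "ci - hh - (int r - 1)" "ci - hh - int r" "ci - hh - (- int r)" m] by simp
next
  case (2 r)
  have r: "1 \<le> int r" "int r \<le> hh - 1" using assms 2 hk by auto
  have e: "n - 2 = Suc (2*(r-1))" "n + 1 = 2*(Suc r)" "n - 1 = 2*r" using 2 assms by auto
  have sdf19: "sd (n-2) = int r - 1" using e r by (simp add: sdE sdE3 of_nat_diff)
  have sdf20: "sd (n+1) = -(int r + 1)" using e r by (simp add: sdE sdE3 of_nat_diff)
  have sdf21: "sd n = int r" using e r by (simp add: sdE sdE3 of_nat_diff)
  have sdf22: "sd (n-1) = - int r" using e r by (simp add: sdE sdE3 of_nat_diff)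
  show ?thesis unfolding X_def using sdf19 sdf20 sdf21 sdf22
    using cfg_K4o[OF kpos hk r, of "ci - hh - (int r - 1)" ci "ci - hh - (- int r)" "ci - hh - (-(int r + 1))" "ci - hh - int r" m] by simp
qed

lemma K5u: assumes "2 \<le> n" "n \<le> k - 1" "1 \<le> q" "q \<le> n - 2"
  shows "\<not> (prj k m (X q) < prj k m (X (n+1)) \<and> prj k m (X (n+1)) < prj k m (X n) \<and> prj k m (X n) < prj k m (X (n-1)))"
proof (cases n rule: nat_par_cases)
  case (1 r)
  have r: "1 \<le> int r" "int r \<le> hh - 1" using assms 1 hk by auto
  have e: "n + 1 = Suc (2*r)" "n - 1 = Suc (2*(r-1))" using 1 assms by auto
  have sq: "-(int r - 1) \<le> sd q" "sd q \<le> int r - 2"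
  proof -
    have "-(int r - 1) \<le> sd q \<and> sd q \<le> int r - 2"
    proof (cases q rule: nat_par_cases)
      case (1 t) then show ?thesis using assms \<open>n = 2*r\<close> by (simp add: sdE)
    next
      case (2 t) then show ?thesis using assms \<open>n = 2*r\<close> by (simp add: sdE)
    qed
    then show "-(int r - 1) \<le> sd q" "sd q \<le> int r - 2" by auto
  qed
  have sdf23: "sd (n+1) = int r" using e r by (simp add: sdE sdE3 of_nat_diff)
  have sdf24: "sd n = - int r" using e r by (simp add: sdE sdE3 of_nat_diff)
  have sdf25: "sd (n-1) = int r - 1" using e r by (simp add: sdE sdE3 of_nat_diff)
  show ?thesis unfolding X_def using sdf23 sdf24 sdf25
    using cfg_K5e[OF kpos hk r sq, of "ci - hh - sd q" ci "ci - hh - int r" "ci - hh - (- int r)" "ci - hh - (int r - 1)" m] by simp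
next
  case (2 r)
  have r: "1 \<le> int r" "int r \<le> hh - 1" using assms 2 hk by auto
  have e: "n + 1 = 2*(Suc r)" "n - 1 = 2*r" using 2 assms by auto
  have sq: "-(int r - 1) \<le> sd q" "sd q \<le> int r - 1"
  proof -
    have "-(int r - 1) \<le> sd q \<and> sd q \<le> int r - 1"
    proof (cases q rule: nat_par_cases)
      case (1 t) then show ?thesis using assms \<open>n = Suc (2*r)\<close> by (simp add: sdE)
    next
      case (2 t) then show ?thesis using assms \<open>n = Suc (2*r)\<close> by (simp add: sdE)
    qed
    then show "-(int r - 1) \<le> sd q" "sd q \<le> int r - 1" by auto
  qed
  have sdf26: "sd (n+1) = -(int r + 1)" using e r by (simp add: sdE sdE3 of_nat_diff)
  have sdf27: "sd n = int r" using e r by (simp add: sdE sdE3 of_nat_diff)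
  have sdf28: "sd (n-1) = - int r" using e r by (simp add: sdE sdE3 of_nat_diff)
  show ?thesis unfolding X_def using sdf26 sdf27 sdf28
    using cfg_K5o[OF kpos hk r sq, of "ci - hh - sd q" ci "ci - hh - (-(int r + 1))" "ci - hh - int r" "ci - hh - (- int r)" m] by simp
qed

end


context MT begin

lemma path3I: assumes "distinct [a,b,c]" "a \<in> Sk k" "b \<in> Sk k" "c \<in> Sk k" "{a,b} \<in> E" "{b,c} \<in> E"
  shows "is_path (Sk k) E [a,b,c] a c"
  unfolding is_path_iff using assms by simp

lemma path4I: assumes "distinct [a,b,c,d]" "a \<in> Sk k" "b \<in> Sk k" "c \<in> Sk k" "d \<in> Sk k" "{a,b} \<in> E" "{b,c} \<in> E" "{c,d} \<in> E"
  shows "is_path (Sk k) E [a,b,c,d] a d"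
  unfolding is_path_iff using assms by simp

lemma chain3: assumes "is_path (Sk k) E [a,b,c] a c"
  shows "\<exists>m. inner a (dir k m) < inner b (dir k m) \<and> inner b (dir k m) < inner c (dir k m)"
proof -
  obtain m where m: "\<forall>i j. i < j \<longrightarrow> j < length [a,b,c] \<longrightarrow> inner ([a,b,c]!i) (dir k m) < inner ([a,b,c]!j) (dir k m)"
    using dm_path[OF assms] by blast
  have "inner a (dir k m) < inner b (dir k m)" using m[rule_format, of 0 1] by simp
  moreover have "inner b (dir k m) < inner c (dir k m)" using m[rule_format, of 1 2] by simp
  ultimately show ?thesis by blast
qed

lemma chain4: assumes "is_path (Sk k) E [a,b,c,d] a d"
  shows "\<exists>m. inner a (dir k m) < inner b (dir k m) \<and> inner b (dir k m) < inner c (dir k m) \<and> inner c (dir k m) < inner d (dir k m)"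
proof -
  obtain m where m: "\<forall>i j. i < j \<longrightarrow> j < length [a,b,c,d] \<longrightarrow> inner ([a,b,c,d]!i) (dir k m) < inner ([a,b,c,d]!j) (dir k m)"
    using dm_path[OF assms] by blast
  have "inner a (dir k m) < inner b (dir k m)" using m[rule_format, of 0 1] by simp
  moreover have "inner b (dir k m) < inner c (dir k m)" using m[rule_format, of 1 2] by simp
  moreover have "inner c (dir k m) < inner d (dir k m)" using m[rule_format, of 2 3] by simp
  ultimately show ?thesis by blast
qed

lemma E_par: "v \<in> Sk k \<Longrightarrow> v \<noteq> (0,0) \<Longrightarrow> {v, par v} \<in> E" using par(2) by blast
lemma E_par': "v \<in> Sk k \<Longrightarrow> v \<noteq> (0,0) \<Longrightarrow> {par v, v} \<in> E" using par(2) by (simp add: insert_commute)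

lemma in_rp_idx: assumes "y \<in> Sk k" "z \<in> set (rp y)" "z \<noteq> (0,0)" shows "\<exists>p < hgt y. rp y ! p = z"
proof -
  obtain p where p: "p < length (rp y)" "rp y ! p = z" using assms(2) by (metis in_set_conv_nth)
  have "p \<noteq> hgt y" using p assms(3) rp_nth_last[OF assms(1)] by auto
  then show ?thesis using p rp_len[OF assms(1)] by (intro exI[of _ p]) auto
qed

end

locale MTN = MTC + assumes ne: "Cc \<noteq> {V k ci}"
begin

lemma s_C: assumes "1 \<le> q" "q \<le> k" shows "s q \<in> Cc"
proof -
  have r: "-hh \<le> sd q \<and> sd q \<le> hh - 1" using sd_range[OF assms hk] .
  have "s q = V k (ci - (hh + sd q))" unfolding s_def X_def by (simp add: algebra_simps)
  then show ?thesis using comp_b[OF ne, of "hh + sd q"] r hk by simp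
qed

lemma s_S: "s q \<in> Sk k" "s q \<noteq> (0,0)" unfolding s_def using VS V0 by auto

lemma s_k: "s k = V k ci" unfolding s_def X_def using sd_kk[OF hk] by simp

lemma dvd_small: fixes d m :: int assumes "m > 0" "d mod m = 0" "-m < d" "d < m" shows "d = 0"
proof -
  have dv: "m dvd d" using assms(2) by (simp add: dvd_eq_mod_eq_0)
  show ?thesis
  proof (rule ccontr)
    assume "d \<noteq> 0"
    then consider "0 < d" | "0 < -d" by linarith
    then show False
    proof cases
      case 1 then show False using zdvd_imp_le[OF dv 1] assms by simp
    next
      case 2 have "m dvd -d" using dv by simp
      then have "m \<le> -d" using zdvd_imp_le 2 by blast
      then show False using assms by simp
    qed
  qed
qed

lemma s_inj: assumes "1 \<le> a" "a \<le> k" "1 \<le> b" "b \<le> k" "s a = s b" shows "a = b"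
proof -
  have "(X a - X b) mod (2 * int k) = 0" using assms(5) unfolding s_def Veq .
  moreover have "X a - X b = sd b - sd a" unfolding X_def by simp
  moreover have "-hh \<le> sd a \<and> sd a \<le> hh - 1" "-hh \<le> sd b \<and> sd b \<le> hh - 1" using sd_range assms hk by auto
  ultimately have "sd b - sd a = 0" using dvd_small[of "2 * int k" "sd b - sd a"] kpos hk by simp
  then have "sd a = sd b" by simp
  show ?thesis
  proof (rule ccontr)
    assume "a \<noteq> b"
    then consider "a < b" | "b < a" by linarith
    then show False using sd_mono[of a b] sd_mono[of b a] assms \<open>sd a = sd b\<close> by cases auto
  qed
qed

lemma C_s: assumes "v \<in> Cc" shows "\<exists>q. 1 \<le> q \<and> q \<le> k \<and> v = s q"
proof -
  obtain j where j: "0 \<le> j" "j \<le> int k - 1" "v = V k (ci - j)" using comp_a[OF assms] by blast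
  obtain q where q: "1 \<le> q" "q \<le> k" "sd q = j - hh" using sd_surj[of hh "j - hh" k] j hk by auto
  have "s q = v" unfolding s_def X_def j(3) q(3) by simp
  then show ?thesis using q by blast
qed

lemma key: assumes "1 \<le> a" "a \<le> k" "1 \<le> b" "b \<le> k" and lt: "cc k (- 3 * sd b - 1) < cc k (- 3 * sd a - 1)"
  shows "a < b"
proof -
  have ra: "abs (- 3 * sd a - 1) \<le> 3 * int k" and rb: "abs (- 3 * sd b - 1) \<le> 3 * int k"
    using sd_range[OF assms(1,2) hk] sd_range[OF assms(3,4) hk] hk by auto
  have "abs (- 3 * sd a - 1) < abs (- 3 * sd b - 1)" using lt cc_less[OF kpos rb ra] by simp
  then have "abs (3 * sd a + 1) < abs (3 * sd b + 1)" by simp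
  then show ?thesis using sd_mono[of b a] assms by (cases "a < b") (auto simp: not_less le_less)
qed

lemma heap: assumes y: "y \<in> Cc" "y \<noteq> V k ci" and ij: "i < j" "j < hgt y"
  and ab: "1 \<le> a" "a \<le> k" "1 \<le> b" "b \<le> k" and ya: "rp y ! i = s a" and yb: "rp y ! j = s b"
  shows "a < b"
proof -
  obtain m where f: "\<forall>x. prj k m x = - cc k (3*(x - ci) + 3*hh - 1)"
    and inc: "\<forall>i j. i < j \<longrightarrow> j < hgt y \<longrightarrow> inner (rp y ! i) (dir k m) < inner (rp y ! j) (dir k m)"
    using comp_heap[OF ne y] by blast
  have e: "inner (s q) (dir k m) = - cc k (- 3 * sd q - 1)" for q
    unfolding is_s X_def using f[rule_format, of "ci - hh - sd q"] by (simp add: algebra_simps)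
  have "inner (s a) (dir k m) < inner (s b) (dir k m)" using inc ij ya yb by metis
  then show ?thesis unfolding e using key[OF ab] by simp
qed

lemma idx_s: assumes y: "y \<in> Cc" and p: "p < hgt y" shows "\<exists>b. 1 \<le> b \<and> b \<le> k \<and> rp y ! p = s b"
proof -
  have yS: "y \<in> Sk k" "y \<noteq> (0,0)" using y unfolding Cc_def by auto
  have "rp y ! p \<in> Cc" using rt_idx[OF yS p] y unfolding Cc_def by simp
  then show ?thesis using C_s by blast
qed

lemma s_ne_c: assumes "1 \<le> a" "a < k" shows "s a \<noteq> V k ci"
  using s_inj[of a k] assms s_k by auto

lemma PB: assumes a: "1 \<le> a" "a < b" "b \<le> k" and inr: "s b \<in> set (rp (s a))"
  shows "\<exists>q. a < q \<and> q \<le> b \<and> par (s a) = s q"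
proof -
  define y where "y = s a"
  have yC: "y \<in> Cc" unfolding y_def using s_C a by simp
  have ync: "y \<noteq> V k ci" unfolding y_def using s_ne_c a by simp
  have yS: "y \<in> Sk k" "y \<noteq> (0,0)" unfolding y_def using s_S by auto
  obtain p where p: "p < hgt y" "rp y ! p = s b" using in_rp_idx[OF yS(1) inr[folded y_def] s_S(2)] by blast
  have p0: "p \<noteq> 0"
  proof
    assume "p = 0" then have "s a = s b" using p rp_0[OF yS(1)] unfolding y_def by simp
    then show False using s_inj[of a b] a by simp
  qed
  have l: "Suc 0 < length (rp y)" using p p0 rp_len[OF yS(1)] by simp
  have r1: "rp y ! 1 = par (s a)" using rp_nth_par[OF yS(1) l] rp_0[OF yS(1)] unfolding y_def by simp
  have h1: "1 < hgt y" using p p0 by simp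
  obtain q where q: "1 \<le> q" "q \<le> k" "rp y ! 1 = s q" using idx_s[OF yC h1] by blast
  have aq: "a < q" using heap[OF yC ync _ h1 _ _ q(1,2) _ q(3)] a rp_0[OF yS(1)] unfolding y_def by simp
  have "q \<le> b"
  proof (cases "p = 1")
    case True then have "s q = s b" using p q by simp
    then show ?thesis using s_inj[of q b] q a by simp
  next
    case False
    then have "1 < p" using p0 by simp
    then show ?thesis using heap[OF yC ync \<open>1 < p\<close> p(1) q(1,2) _ _ q(3) p(2)] a by simp
  qed
  then show ?thesis using aq q r1 by auto
qed

definition Hp :: "nat \<Rightarrow> bool" where "Hp n \<longleftrightarrow> (\<forall>i. 1 \<le> i \<longrightarrow> i < n \<longrightarrow> s n \<in> set (rp (s i)))"

lemma HA: assumes "1 \<le> n" "n \<le> k - 1" "Hp (n+1)" shows "par (s n) = s (n+1)"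
proof -
  have "s (n+1) \<in> set (rp (s n))" using assms unfolding Hp_def by simp
  moreover have "n + 1 \<le> k" using assms k2 by simp
  ultimately obtain q where "n < q" "q \<le> n + 1" "par (s n) = s q" using PB[of n "n+1"] assms by auto
  moreover from calculation have "q = n + 1" by simp
  ultimately show ?thesis by simp
qed

lemma s_neq: assumes "1 \<le> a" "a \<le> k" "1 \<le> b" "b \<le> k" "a \<noteq> b" shows "s a \<noteq> s b"
  using s_inj assms by blast

lemma Es: assumes "par (s a) = s b" shows "{s a, s b} \<in> E" "{s b, s a} \<in> E"
proof -
  have "{s a, par (s a)} \<in> E" using E_par[of "s a"] s_S by simp
  then show "{s a, s b} \<in> E" "{s b, s a} \<in> E" using assms by (simp_all add: insert_commute)
qed

lemma NoA: assumes n: "2 \<le> n" "n \<le> k - 1" and H: "Hp (n+1)" and pn: "par (s n) = s (n+1)"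
  and q: "1 \<le> q" "q < n" and pq: "par (s q) = s (n+1)" shows False
proof -
  have kk: "n + 1 \<le> k" using n k2 by simp
  have "s (n+1) \<in> set (rp (s (n-1)))" using H n unfolding Hp_def by simp
  then have "\<exists>q. n - 1 < q \<and> q \<le> n+1 \<and> par (s (n-1)) = s q" using n kk by (intro PB) auto
  then obtain q1 where q1: "n - 1 < q1" "q1 \<le> n+1" "par (s (n-1)) = s q1" by blast
  have c2: "par (s (n-1)) \<noteq> s (n+1)"
  proof
    assume e: "par (s (n-1)) = s (n+1)"
    show False
    proof (cases "n = 2")
      case True
      have e1: "par (s 1) = s 3" and e2: "par (s 2) = s 3" using e pn True by simp_all
      have p: "is_path (Sk k) E [s 1, s 3, s 2] (s 1) (s 2)"
        using s_neq[of 1 3] s_neq[of 1 2] s_neq[of 3 2] kk True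
        by (intro path3I s_S Es(1)[OF e1] Es(2)[OF e2]) auto
      obtain m where "inner (s 1) (dir k m) < inner (s 3) (dir k m) \<and> inner (s 3) (dir k m) < inner (s 2) (dir k m)"
        using chain3[OF p] by blast
      then show False using K1u[of m] kk True unfolding is_s by simp
    next
      case False
      then have n3: "3 \<le> n" using n by simp
      have "s (n+1) \<in> set (rp (s (n-2)))" using H n3 unfolding Hp_def by simp
      then have "\<exists>q. n - 2 < q \<and> q \<le> n+1 \<and> par (s (n-2)) = s q" using n3 kk by (intro PB) auto
      then obtain q2 where q2: "n - 2 < q2" "q2 \<le> n+1" "par (s (n-2)) = s q2" by blast
      consider "q2 = n+1" | "q2 = n" | "q2 = n - 1" using q2 n3 by linarith
      then show False
      proof cases
        case 1
        have p: "is_path (Sk k) E [s (n-2), s (n+1), s n] (s (n-2)) (s n)"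
          using s_neq[of "n-2" "n+1"] s_neq[of "n-2" n] s_neq[of "n+1" n] kk n3 q2(3) 1
          by (intro path3I s_S Es(1) Es(2)[OF pn]) auto
        obtain m where "inner (s (n-2)) (dir k m) < inner (s (n+1)) (dir k m) \<and> inner (s (n+1)) (dir k m) < inner (s n) (dir k m)"
          using chain3[OF p] by blast
        then show False using K2u[OF n3 n(2), of m] unfolding is_s by simp
      next
        case 2
        have p: "is_path (Sk k) E [s (n-2), s n, s (n+1), s (n-1)] (s (n-2)) (s (n-1))"
          using s_neq[of "n-2" "n"] s_neq[of "n-2" "n+1"] s_neq[of "n-2" "n-1"] s_neq[of n "n+1"] s_neq[of n "n-1"] s_neq[of "n+1" "n-1"]
            kk n3 Es(1)[of "n-2" n] q2(3) 2 Es(1)[OF pn] Es(2)[OF e]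
          by (intro path4I s_S) auto
        obtain m where "inner (s (n-2)) (dir k m) < inner (s n) (dir k m) \<and> inner (s n) (dir k m) < inner (s (n+1)) (dir k m)
            \<and> inner (s (n+1)) (dir k m) < inner (s (n-1)) (dir k m)"
          using chain4[OF p] by blast
        then show False using K3u[OF n3 n(2), of m] unfolding is_s by simp
      next
        case 3
        have p: "is_path (Sk k) E [s (n-2), s (n-1), s (n+1), s n] (s (n-2)) (s n)"
          using s_neq[of "n-2" "n-1"] s_neq[of "n-2" "n+1"] s_neq[of "n-2" "n"] s_neq[of "n-1" "n+1"] s_neq[of "n-1" "n"] s_neq[of "n+1" "n"]
            kk n3 Es(1)[of "n-2" "n-1"] q2(3) 3 Es(1)[OF e] Es(2)[OF pn]
          by (intro path4I s_S) auto
        obtain m where "inner (s (n-2)) (dir k m) < inner (s (n-1)) (dir k m) \<and> inner (s (n-1)) (dir k m) < inner (s (n+1)) (dir k m)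
            \<and> inner (s (n+1)) (dir k m) < inner (s n) (dir k m)"
          using chain4[OF p] by blast
        then show False using K4u[OF n3 n(2), of m] unfolding is_s by simp
      qed
    qed
  qed
  have pn1: "par (s (n-1)) = s n"
  proof -
    have "q1 \<noteq> n + 1" using c2 q1 by auto
    then have "q1 = n" using q1 by linarith
    then show ?thesis using q1 by simp
  qed
  have qn: "q \<noteq> n - 1"
  proof
    assume "q = n - 1"
    then have "s n = s (n+1)" using pn1 pq by simp
    then show False using s_neq[of n "n+1"] kk n by simp
  qed
  then have q2: "q \<le> n - 2" using q by simp
  have p: "is_path (Sk k) E [s q, s (n+1), s n, s (n-1)] (s q) (s (n-1))"
    using s_neq[of q "n+1"] s_neq[of q n] s_neq[of q "n-1"] s_neq[of "n+1" n] s_neq[of "n+1" "n-1"] s_neq[of n "n-1"]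
      kk n q q2 Es(1)[OF pq] Es(2)[OF pn] Es(2)[OF pn1]
    by (intro path4I s_S) auto
  obtain m where "inner (s q) (dir k m) < inner (s (n+1)) (dir k m) \<and> inner (s (n+1)) (dir k m) < inner (s n) (dir k m)
      \<and> inner (s n) (dir k m) < inner (s (n-1)) (dir k m)"
    using chain4[OF p] by blast
  then show False using K5u[OF n q(1) q2, of m] unfolding is_s by simp
qed

lemma HB: assumes n: "2 \<le> n" "n \<le> k - 1" and H: "Hp (n+1)" shows "Hp n"
  unfolding Hp_def
proof (intro allI impI)
  fix i assume i: "1 \<le> i" "i < n"
  show "s n \<in> set (rp (s i))"
  proof (rule ccontr)
    assume nin: "s n \<notin> set (rp (s i))"
    have kk: "n + 1 \<le> k" using n k2 by simp
    have pn: "par (s n) = s (n+1)" using HA[of n] n H by simp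
    define y where "y = s i"
    have yC: "y \<in> Cc" unfolding y_def using s_C i n by simp
    have ync: "y \<noteq> V k ci" unfolding y_def using s_ne_c i n by simp
    have yS: "y \<in> Sk k" "y \<noteq> (0,0)" unfolding y_def using s_S by auto
    have "s (n+1) \<in> set (rp y)" using H i unfolding Hp_def y_def by simp
    then obtain p where p: "p < hgt y" "rp y ! p = s (n+1)" using in_rp_idx[OF yS(1) _ s_S(2)] by blast
    have p0: "p \<noteq> 0"
    proof
      assume "p = 0" then have "s i = s (n+1)" using p rp_0[OF yS(1)] unfolding y_def by simp
      then show False using s_neq[of i "n+1"] i kk by simp
    qed
    have l: "Suc (p - 1) < length (rp y)" using p p0 rp_len[OF yS(1)] by simp
    have pa: "par (rp y ! (p - 1)) = s (n+1)" using rp_nth_par[OF yS(1) l] p p0 by simp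
    have pl: "p - 1 < hgt y" using p by simp
    obtain q where q: "1 \<le> q" "q \<le> k" "rp y ! (p - 1) = s q" using idx_s[OF yC pl] by blast
    have qlt: "q < n + 1"
    proof (cases "p - 1 = 0")
      case True then have "s q = s i" using q rp_0[OF yS(1)] unfolding y_def by simp
      then have "q = i" using s_inj[of q i] q i n by simp
      then show ?thesis using i by simp
    next
      case False
      then show ?thesis using heap[OF yC ync _ p(1) q(1,2) _ kk q(3) p(2)] p0 by simp
    qed
    have "q \<noteq> n"
    proof
      assume "q = n"
      have "rp y ! (p - 1) \<in> set (rp y)" using l by simp
      then have "s n \<in> set (rp y)" using q(3) \<open>q = n\<close> by simp
      then show False using nin unfolding y_def by simp
    qed
    then have "q < n" using qlt by simp
    then show False using NoA[OF n H pn q(1) _ ] pa q(3) by simp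
  qed
qed

lemma Hall: assumes "2 \<le> n" "n \<le> k" shows "Hp n"
proof -
  have all: "\<forall>t. t \<le> k - 2 \<longrightarrow> Hp (k - t)"
  proof
    fix t show "t \<le> k - 2 \<longrightarrow> Hp (k - t)"
    proof (induction t)
      case 0
      have "Hp k" unfolding Hp_def
      proof (intro allI impI)
        fix i assume i: "1 \<le> i" "i < k"
        have "s i \<in> Cc" using s_C i by simp
        then have "rt (s i) = V k ci" unfolding Cc_def by simp
        moreover have "rt (s i) \<in> set (rp (s i))" using rt_props(1)[of "s i"] s_S by simp
        ultimately show "s k \<in> set (rp (s i))" using s_k by simp
      qed
      then show ?case by simp
    next
      case (Suc t)
      show ?case
      proof
        assume t: "Suc t \<le> k - 2"
        then have "Hp (k - t)" using Suc.IH by simp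
        moreover have "k - t = (k - Suc t) + 1" using t by simp
        ultimately show "Hp (k - Suc t)" using HB[of "k - Suc t"] t by simp
      qed
    qed
  qed
  have "Hp (k - (k - n))" using assms by (intro mp[OF spec[OF all, of "k - n"]]) simp
  then show ?thesis using assms by simp
qed

lemma chain: assumes "1 \<le> n" "n \<le> k - 1" shows "par (s n) = s (Suc n)"
  using HA[OF assms Hall[of "n+1"]] assms k2 by simp

end


context MTN begin

lemma C_eq: "Cc = s ` {1..k}"
proof
  show "Cc \<subseteq> s ` {1..k}" using C_s by fastforce
  show "s ` {1..k} \<subseteq> Cc" using s_C by auto
qed

lemma s_inj_on: "inj_on s {1..k}" unfolding inj_on_def using s_inj by auto

lemma card_C: "card Cc = k" unfolding C_eq using card_image[OF s_inj_on] by simp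

lemma dist_s: assumes "1 \<le> n" "n \<le> k - 1"
  shows "dist (s n) (s (Suc n)) = 2 * sin (real n * pi / (2 * real k))"
proof -
  have "dist (s n) (s (Suc n)) = sqrt (2 - 2 * cos (real_of_int (X n - X (Suc n)) * pi / real k))"
    unfolding s_def using V_dist_sq[OF kpos] .
  also have "X n - X (Suc n) = sd (Suc n) - sd n" unfolding X_def by simp
  also have "cos (real_of_int (sd (Suc n) - sd n) * pi / real k) = cos (real_of_int (int n) * pi / real k)"
  proof -
    have a: "abs (sd (Suc n) - sd n) = int n" using sd_gap assms by simp
    show ?thesis
    proof (cases "0 \<le> sd (Suc n) - sd n")
      case True then show ?thesis using a by simp
    next
      case False
      then have "sd (Suc n) - sd n = - int n" using a by simp
      then show ?thesis by (simp add: minus_divide_left[symmetric])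
    qed
  qed
  also have "sqrt (2 - 2 * cos (real_of_int (int n) * pi / real k)) = 2 * sin (real_of_int (int n) * pi / (2 * real k))"
    using chord[OF kpos, of "int n"] assms by simp
  finally show ?thesis by simp
qed

lemma comp_sum: "real k < (\<Sum>v\<in>Cc. dist v (par v))"
proof -
  have "(\<Sum>v\<in>Cc. dist v (par v)) = (\<Sum>n\<in>{1..k}. dist (s n) (par (s n)))"
    unfolding C_eq by (rule sum.reindex[OF s_inj_on, unfolded comp_def])
  also have "{1..k} = insert k {1..k-1}" using k2 by auto
  also have "(\<Sum>n\<in>insert k {1..k-1}. dist (s n) (par (s n))) = dist (s k) (par (s k)) + (\<Sum>n\<in>{1..k-1}. dist (s n) (par (s n)))"
    using k2 by (intro sum.insert) auto
  also have "dist (s k) (par (s k)) = 1" unfolding s_k croot using norm_V[OF kpos] .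
  also have "(\<Sum>n\<in>{1..k-1}. dist (s n) (par (s n))) = (\<Sum>n\<in>{1..k-1}. 2 * sin (real n * pi / (2 * real k)))"
    using chain dist_s by (intro sum.cong) auto
  finally have e: "(\<Sum>v\<in>Cc. dist v (par v)) = 1 + (\<Sum>n\<in>{1..k-1}. 2 * sin (real n * pi / (2 * real k)))" .
  show ?thesis unfolding e using trig_sum[OF k2] by simp
qed

end


lemma diam2: "diameter {a, b::'a::real_normed_vector} = dist a b"
proof (rule antisym)
  show "diameter {a, b} \<le> dist a b"
  proof (rule diameter_le)
    fix x y assume "x \<in> {a,b}" "y \<in> {a,b}"
    then show "norm (x - y) \<le> dist a b" by (auto simp: dist_norm norm_minus_commute)
  qed simp
  show "dist a b \<le> diameter {a, b}"
    by (rule diameter_bounded_bound) (auto intro: finite_imp_bounded)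
qed

lemma fin_Sk: "finite (Sk k)" unfolding Sk_def by simp

lemma polyv_ne: "k > 0 \<Longrightarrow> i < 2 * k \<Longrightarrow> polyv k i \<noteq> (0,0)"
  using polyv_V V_neq_o by metis

lemma dvd_small_g: fixes d m :: int assumes "m > 0" "d mod m = 0" "-m < d" "d < m" shows "d = 0"
proof -
  have dv: "m dvd d" using assms(2) by (simp add: dvd_eq_mod_eq_0)
  show ?thesis
  proof (rule ccontr)
    assume "d \<noteq> 0"
    then consider "0 < d" | "0 < -d" by linarith
    then show False
    proof cases
      case 1 then show False using zdvd_imp_le[OF dv 1] assms by simp
    next
      case 2 have "m dvd -d" using dv by simp
      then have "m \<le> -d" using zdvd_imp_le 2 by blast
      then show False using assms by simp
    qed
  qed
qed

context MT begin

definition PV :: "pt set" where "PV = polyv k ` {..<2*k}"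

lemma S_PV: "Sk k = insert (0,0) PV" unfolding Sk_def PV_def ..
lemma o_PV: "(0,0) \<notin> PV"
proof
  assume "(0,0) \<in> PV"
  then obtain i where "i < 2*k" "(0,0) = polyv k i" unfolding PV_def by auto
  then show False using polyv_ne[OF kpos, of i] by simp
qed
lemma PV_S: "v \<in> PV \<longleftrightarrow> v \<in> Sk k \<and> v \<noteq> (0,0)" using S_PV o_PV by auto
lemma fin_PV: "finite PV" unfolding PV_def by simp
lemma fin_E: "finite E"
proof -
  have "E \<subseteq> Pow (Sk k)" using sp unfolding spanning_tree_def is_graph_def by auto
  then show ?thesis using fin_Sk by (meson finite_Pow_iff finite_subset)
qed

lemma par_ne: assumes "v \<in> Sk k" "v \<noteq> (0,0)" shows "par v \<noteq> v"
  using par(3)[OF assms] by auto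

lemma inj_edge: "inj_on (\<lambda>v. {v, par v}) PV"
proof (rule inj_onI)
  fix v w assume v: "v \<in> PV" and w: "w \<in> PV" and e: "{v, par v} = {w, par w}"
  show "v = w"
  proof (rule ccontr)
    assume vw: "v \<noteq> w"
    then have "v = par w" "w = par v" using e by (auto simp: doubleton_eq_iff)
    then show False using par(3)[of v] par(3)[of w] v w unfolding PV_S by auto
  qed
qed

lemma E_diam: "e \<in> E \<Longrightarrow> 0 \<le> diameter e"
  using sp unfolding spanning_tree_def is_graph_def by (auto simp: diam2)

lemma tl_ge: "(\<Sum>v\<in>PV. dist v (par v)) \<le> tree_length E"
proof -
  have sub: "(\<lambda>v. {v, par v}) ` PV \<subseteq> E"
  proof
    fix e assume "e \<in> (\<lambda>v. {v, par v}) ` PV"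
    then obtain v where v: "v \<in> PV" "e = {v, par v}" by blast
    have "v \<in> Sk k" "v \<noteq> (0,0)" using v(1) PV_S by blast+
    then show "e \<in> E" using par(2) v(2) by blast
  qed
  have "(\<Sum>v\<in>PV. dist v (par v)) = (\<Sum>v\<in>PV. diameter {v, par v})" by (simp add: diam2)
  also have "\<dots> = (\<Sum>e\<in>(\<lambda>v. {v, par v}) ` PV. diameter e)"
    using sum.reindex[OF inj_edge, of diameter] by (simp add: comp_def)
  also have "\<dots> \<le> (\<Sum>e\<in>E. diameter e)" using sub fin_E E_diam by (intro sum_mono2) auto
  finally show ?thesis unfolding tree_length_def .
qed

lemma fiber: assumes c: "c \<in> rt ` PV"
  shows "real (card {v \<in> PV. rt v = c}) \<le> (\<Sum>v\<in>{v \<in> PV. rt v = c}. dist v (par v))"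
    and "{v \<in> PV. rt v = c} \<noteq> {c} \<Longrightarrow> real (card {v \<in> PV. rt v = c}) < (\<Sum>v\<in>{v \<in> PV. rt v = c}. dist v (par v))"
proof -
  obtain v0 where v0: "v0 \<in> PV" "c = rt v0" using c by blast
  have v0S: "v0 \<in> Sk k" "v0 \<noteq> (0,0)" using v0 PV_S by auto
  have cS: "c \<in> Sk k" "c \<noteq> (0,0)" "par c = (0,0)" using rt_props[OF v0S] v0 by auto
  have "c \<in> PV" using cS PV_S by simp
  then obtain i where i: "i < 2*k" "c = polyv k i" unfolding PV_def by auto
  define ci where "ci = int i"
  have cV: "c = V k ci" unfolding ci_def using polyv_V i by simp
  interpret C: MTC k E ci using cS(3) cV by unfold_locales simp
  have F: "{v \<in> PV. rt v = c} = C.Cc" unfolding C.Cc_def PV_S cV by auto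
  have cc: "rt c = c" using rt_root[OF cS] .
  have cF: "c \<in> {v \<in> PV. rt v = c}" using \<open>c \<in> PV\<close> cc by simp
  show "real (card {v \<in> PV. rt v = c}) \<le> (\<Sum>v\<in>{v \<in> PV. rt v = c}. dist v (par v))"
  proof (cases "{v \<in> PV. rt v = c} = {c}")
    case True
    then show ?thesis using cS norm_V[OF kpos] cV by simp
  next
    case False
    interpret N: MTN k E ci using False F cV by unfold_locales simp
    show ?thesis unfolding F using N.comp_sum N.card_C by simp
  qed
  assume ne: "{v \<in> PV. rt v = c} \<noteq> {c}"
  interpret N: MTN k E ci using ne F cV by unfold_locales simp
  show "real (card {v \<in> PV. rt v = c}) < (\<Sum>v\<in>{v \<in> PV. rt v = c}. dist v (par v))"
    unfolding F using N.comp_sum N.card_C by simp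
qed

lemma card_PV: "card PV = 2 * k"
proof -
  have "inj_on (polyv k) {..<2*k}"
  proof (rule inj_onI)
    fix i j assume ij: "i \<in> {..<2*k}" "j \<in> {..<2*k}" "polyv k i = polyv k j"
    then have a1: "(int i - int j) mod (2 * int k) = 0" using polyv_V[of i k] polyv_V[of j k] V_eq_iff[OF kpos hk] by simp
    have a2: "- (2 * int k) < int i - int j" "int i - int j < 2 * int k" using ij by auto
    have "int i - int j = 0" by (rule dvd_small_g[OF _ a1 a2]) (use kpos in simp)
    then show "i = j" by simp
  qed
  then show ?thesis unfolding PV_def by (simp add: card_image)
qed

lemma star_sub: assumes "\<forall>v\<in>PV. par v = (0,0)" shows "star k = (\<lambda>v. {v, par v}) ` PV"
proof -
  have "star k = (\<lambda>i. {(0,0), polyv k i}) ` {..<2*k}" unfolding star_def by auto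
  also have "\<dots> = (\<lambda>v. {(0,0), v}) ` PV" unfolding PV_def by auto
  also have "\<dots> = (\<lambda>v. {v, par v}) ` PV" using assms by (intro image_cong) (auto simp: insert_commute)
  finally show ?thesis .
qed

lemma main_bound: assumes ne: "E \<noteq> star k" shows "real (2*k) < tree_length E"
proof -
  define R where "R = rt ` PV"
  define Fb where "Fb c = {v \<in> PV. rt v = c}" for c
  have finR: "finite R" unfolding R_def using fin_PV by simp
  have g1: "(\<Sum>c\<in>R. \<Sum>v\<in>Fb c. dist v (par v)) = (\<Sum>v\<in>PV. dist v (par v))"
    unfolding Fb_def R_def by (rule sum.group[OF fin_PV]) (use fin_PV in auto)
  have g2: "(\<Sum>c\<in>R. real (card (Fb c))) = real (2*k)"
  proof -
    have "(\<Sum>c\<in>R. \<Sum>v\<in>Fb c. (1::real)) = (\<Sum>v\<in>PV. (1::real))"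
      unfolding Fb_def R_def by (rule sum.group[OF fin_PV]) (use fin_PV in auto)
    then show ?thesis using card_PV by simp
  qed
  have fle: "real (card (Fb c)) \<le> (\<Sum>v\<in>Fb c. dist v (par v))" if "c \<in> R" for c
    using fiber(1) that unfolding R_def Fb_def by blast
  show ?thesis
  proof (cases "\<exists>c\<in>R. Fb c \<noteq> {c}")
    case True
    then obtain c where c: "c \<in> R" "Fb c \<noteq> {c}" by blast
    have "real (card (Fb c)) < (\<Sum>v\<in>Fb c. dist v (par v))" using fiber(2) c unfolding R_def Fb_def by blast
    then have "(\<Sum>c\<in>R. real (card (Fb c))) < (\<Sum>c\<in>R. \<Sum>v\<in>Fb c. dist v (par v))"
      using finR fle c by (intro sum_strict_mono_ex1) auto
    then show ?thesis using g1 g2 tl_ge by simp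
  next
    case False
    have pv: "\<forall>v\<in>PV. par v = (0,0)"
    proof
      fix v assume v: "v \<in> PV"
      then have "v \<in> Fb (rt v)" "rt v \<in> R" unfolding Fb_def R_def by auto
      then have "v = rt v" using False by blast
      moreover have "par (rt v) = (0,0)" using rt_props(4) v PV_S by blast
      ultimately show "par v = (0,0)" by simp
    qed
    have st: "star k = (\<lambda>v. {v, par v}) ` PV" using star_sub[OF pv] .
    have sub: "star k \<subseteq> E"
    proof
      fix e assume "e \<in> star k"
      then obtain v where v: "v \<in> PV" "e = {v, par v}" unfolding st by blast
      have "v \<in> Sk k" "v \<noteq> (0,0)" using v(1) PV_S by blast+
      then show "e \<in> E" using par(2) v(2) by blast
    qed
    then obtain e where e: "e \<in> E" "e \<notin> star k" using ne by blast
    obtain a b where ab: "e = {a,b}" "a \<noteq> b" using e(1) sp unfolding spanning_tree_def is_graph_def by blast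
    have de: "0 < diameter e" unfolding ab diam2 using ab by simp
    have "(\<Sum>x\<in>star k. diameter x) = (\<Sum>v\<in>PV. dist v (par v))"
      unfolding st using sum.reindex[OF inj_edge, of diameter] by (simp add: comp_def diam2)
    also have "\<dots> = real (2*k)"
    proof -
      have "(\<Sum>v\<in>PV. dist v (par v)) = (\<Sum>v\<in>PV. (1::real))"
      proof (intro sum.cong refl)
        fix v assume v: "v \<in> PV"
        then obtain i where "i < 2*k" "v = polyv k i" unfolding PV_def by auto
        then show "dist v (par v) = 1" using pv v polyv_V norm_V[OF kpos] by metis
      qed
      then show ?thesis using card_PV by simp
    qed
    finally have s1: "(\<Sum>x\<in>star k. diameter x) = real (2*k)" .
    have "(\<Sum>x\<in>insert e (star k). diameter x) \<le> (\<Sum>x\<in>E. diameter x)"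
      using sub e fin_E E_diam by (intro sum_mono2) auto
    moreover have "(\<Sum>x\<in>insert e (star k). diameter x) = diameter e + (\<Sum>x\<in>star k. diameter x)"
      using e(2) fin_E sub by (intro sum.insert) (auto intro: finite_subset)
    ultimately show ?thesis using s1 de unfolding tree_length_def by simp
  qed
qed

end


lemma o_in_Sk: "(0,0) \<in> Sk k" unfolding Sk_def by simp

lemma polyv_inj: assumes k: "k > 0" "even k" shows "inj_on (polyv k) {..<2*k}"
proof (rule inj_onI)
  obtain h where hk: "int k = 2*h" using k(2) by (metis evenE of_nat_mult of_nat_numeral)
  fix i j assume ij: "i \<in> {..<2*k}" "j \<in> {..<2*k}" "polyv k i = polyv k j"
  then have a1: "(int i - int j) mod (2 * int k) = 0" using polyv_V[of i k] polyv_V[of j k] V_eq_iff[OF k(1) hk] by simp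
  have a2: "- (2 * int k) < int i - int j" "int i - int j < 2 * int k" using ij by auto
  have "int i - int j = 0" by (rule dvd_small_g[OF _ a1 a2]) (use k in simp)
  then show "i = j" by simp
qed

lemma star_img: "star k = (\<lambda>i. {(0,0), polyv k i}) ` {..<2*k}" unfolding star_def by auto

lemma star_edge: assumes "k > 0" "e \<in> star k" shows "\<exists>w. w \<in> Sk k \<and> w \<noteq> (0,0) \<and> e = {(0,0), w}"
proof -
  obtain i where "i < 2*k" "e = {(0,0), polyv k i}" using assms(2) unfolding star_img by auto
  moreover have "polyv k i \<in> Sk k" using \<open>i < 2*k\<close> unfolding Sk_def by auto
  ultimately show ?thesis using polyv_ne[OF assms(1)] by blast
qed

lemma star_mem: assumes "w \<in> Sk k" "w \<noteq> (0,0)" shows "{(0,0), w} \<in> star k" "{w, (0,0)} \<in> star k"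
  using assms unfolding Sk_def star_img by (auto simp: insert_commute)

lemma star_inj: assumes k: "k > 0" "even k" shows "inj_on (\<lambda>i. {(0,0), polyv k i}) {..<2*k}"
proof (rule inj_onI)
  fix i j assume ij: "i \<in> {..<2*k}" "j \<in> {..<2*k}" "{(0,0), polyv k i} = {(0,0), polyv k j}"
  then have "polyv k i = polyv k j" using polyv_ne[OF k(1), of i] polyv_ne[OF k(1), of j] by (auto simp: doubleton_eq_iff)
  then show "i = j" using polyv_inj[OF k] ij by (auto dest: inj_onD)
qed

lemma card_star: assumes "k > 0" "even k" shows "card (star k) = 2*k"
  unfolding star_img using card_image[OF star_inj[OF assms]] by simp

lemma degree_star: assumes "k > 0" "even k" shows "degree (star k) (0,0) = 2*k"
proof -
  have "{e \<in> star k. (0,0) \<in> e} = star k" unfolding star_img by auto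
  then show ?thesis unfolding degree_def using card_star[OF assms] by simp
qed

lemma tl_star: assumes k: "k > 0" "even k" shows "tree_length (star k) = real (2*k)"
proof -
  have "tree_length (star k) = (\<Sum>i\<in>{..<2*k}. diameter {(0,0), polyv k i})"
    unfolding tree_length_def star_img using sum.reindex[OF star_inj[OF k], of diameter] by (simp add: comp_def)
  also have "\<dots> = (\<Sum>i\<in>{..<2*k}. (1::real))"
  proof (intro sum.cong refl)
    fix i assume "i \<in> {..<2*k}"
    then have "polyv k i = V k (int i)" using polyv_V by simp
    then show "diameter {(0,0), polyv k i} = 1" unfolding diam2 using norm_V[OF k(1), of "int i"] by (simp add: dist_commute)
  qed
  finally show ?thesis by simp
qed

lemma star_graph: assumes "k > 0" shows "is_graph (Sk k) (star k)"
  unfolding is_graph_def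
proof
  fix e assume "e \<in> star k"
  then obtain w where "w \<in> Sk k" "w \<noteq> (0,0)" "e = {(0,0), w}" using star_edge[OF assms] by blast
  then show "\<exists>a b. e = {a, b} \<and> a \<in> Sk k \<and> b \<in> Sk k \<and> a \<noteq> b" using o_in_Sk by (intro exI[of _ "(0,0)"] exI[of _ w]) auto
qed



lemma star_o: assumes "k > 0" "{a,b} \<in> star k" shows "a = (0,0) \<or> b = (0,0)"
proof -
  obtain w where "{a,b} = {(0,0), w}" using star_edge[OF assms] by blast
  then show ?thesis by (auto simp: doubleton_eq_iff)
qed

lemma star_path: assumes k: "k > 0" and p: "is_path (Sk k) (star k) ps u v"
  shows "(ps = [u] \<and> u = v) \<or> (ps = [u,v] \<and> u \<noteq> v \<and> (u = (0,0) \<or> v = (0,0)))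
    \<or> (ps = [u,(0,0),v] \<and> u \<noteq> (0,0) \<and> v \<noteq> (0,0) \<and> u \<noteq> v)"
proof -
  have ne: "ps \<noteq> []" and hu: "hd ps = u" and lv: "last ps = v" and d: "distinct ps"
    and sc: "successively (\<lambda>a b. {a,b} \<in> star k) ps" using p unfolding is_path_iff by auto
  obtain a r where ps: "ps = a # r" using ne by (cases ps) auto
  show ?thesis
  proof (cases r)
    case Nil then show ?thesis using ps hu lv by simp
  next
    case (Cons b r2)
    show ?thesis
    proof (cases r2)
      case Nil
      then have "ps = [a,b]" using ps Cons by simp
      then show ?thesis using hu lv d sc star_o[OF k, of a b] by auto
    next
      case (Cons c r3)
      note r2 = this
      show ?thesis
      proof (cases r3)
        case Nil
        then have pe: "ps = [a,b,c]" using ps \<open>r = b # r2\<close> r2 by simp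
        have ab: "a = (0,0) \<or> b = (0,0)" and bc: "b = (0,0) \<or> c = (0,0)"
          using sc star_o[OF k, of a b] star_o[OF k, of b c] unfolding pe by auto
        have dd: "a \<noteq> b" "a \<noteq> c" "b \<noteq> c" using d unfolding pe by auto
        have "b = (0,0)" using ab bc dd by auto
        then show ?thesis using pe hu lv dd by auto
      next
        case (Cons e r4)
        then have pe: "ps = a # b # c # e # r4" using ps \<open>r = b # r2\<close> r2 by simp
        have ab: "a = (0,0) \<or> b = (0,0)" and ce: "c = (0,0) \<or> e = (0,0)"
          using sc star_o[OF k, of a b] star_o[OF k, of c e] unfolding pe by auto
        have "a \<noteq> c" "a \<noteq> e" "b \<noteq> c" "b \<noteq> e" using d unfolding pe by auto
        then show ?thesis using ab ce by auto
      qed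
    qed
  qed
qed

lemma star_span: assumes k: "k > 0" shows "spanning_tree (Sk k) (star k)"
  unfolding spanning_tree_def
proof (intro conjI ballI)
  show "is_graph (Sk k) (star k)" using star_graph[OF k] .
next
  fix u v assume u: "u \<in> Sk k" and v: "v \<in> Sk k"
  show "\<exists>ps. is_path (Sk k) (star k) ps u v"
  proof (cases "u = v")
    case True then show ?thesis using u by (intro exI[of _ "[u]"]) (simp add: is_path_iff)
  next
    case False
    show ?thesis
    proof (cases "u = (0,0)")
      case True
      then show ?thesis using False v star_mem[OF v] o_in_Sk by (intro exI[of _ "[u,v]"]) (simp add: is_path_iff)
    next
      case uo: False
      show ?thesis
      proof (cases "v = (0,0)")
        case True
        then show ?thesis using False u star_mem[OF u uo] o_in_Sk by (intro exI[of _ "[u,v]"]) (simp add: is_path_iff)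
      next
        case vo: False
        then show ?thesis using False u v uo star_mem[OF u uo] star_mem[OF v vo] o_in_Sk
          by (intro exI[of _ "[u,(0,0),v]"]) (simp add: is_path_iff)
      qed
    qed
  qed
next
  show "\<nexists>cs. is_cycle (Sk k) (star k) cs"
  proof
    assume "\<exists>cs. is_cycle (Sk k) (star k) cs"
    then obtain cs where c: "is_cycle (Sk k) (star k) cs" by blast
    have l: "3 \<le> length cs" and d: "distinct cs"
      and ed: "\<And>i. Suc i < length cs \<Longrightarrow> {cs ! i, cs ! Suc i} \<in> star k"
      and cl: "{last cs, hd cs} \<in> star k" using c unfolding is_cycle_def by auto
    have dn: "cs ! i \<noteq> cs ! j" if "i < length cs" "j < length cs" "i \<noteq> j" for i j
      using d that by (simp add: nth_eq_iff_index_eq)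
    have e01: "cs ! 0 = (0,0) \<or> cs ! 1 = (0,0)" using star_o[OF k ed[of 0]] l by simp
    have e12: "cs ! 1 = (0,0) \<or> cs ! 2 = (0,0)" using star_o[OF k ed[of 1]] l by (simp add: numeral_2_eq_2)
    have n02: "cs ! 0 \<noteq> cs ! 2" using dn[of 0 2] l by fastforce
    have c1: "cs ! 1 = (0,0)"
    proof (rule ccontr)
      assume "cs ! 1 \<noteq> (0,0)"
      then have "cs ! 0 = (0,0)" "cs ! 2 = (0,0)" using e01 e12 by auto
      then show False using n02 by simp
    qed
    show False
    proof (cases "length cs = 3")
      case True
      have cne: "cs \<noteq> []" using l by auto
      have "last cs = cs ! 2" using last_conv_nth[OF cne] True by simp
      moreover have "hd cs = cs ! 0" using hd_conv_nth[OF cne] .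
      ultimately have "cs ! 2 = (0,0) \<or> cs ! 0 = (0,0)" using star_o[OF k cl] by simp
      moreover have "cs ! 1 \<noteq> cs ! 2" "cs ! 1 \<noteq> cs ! 0" using dn[of 1 2] dn[of 1 0] True by fastforce+
      ultimately show False using c1 by auto
    next
      case False
      then have "4 \<le> length cs" using l by simp
      then have "cs ! 2 = (0,0) \<or> cs ! 3 = (0,0)" using star_o[OF k ed[of 2]] by (simp add: eval_nat_numeral)
      moreover have "cs ! 1 \<noteq> cs ! 2" "cs ! 1 \<noteq> cs ! 3" using dn[of 1 2] dn[of 1 3] \<open>4 \<le> length cs\<close> by fastforce+
      ultimately show False using c1 by auto
    qed
  qed
qed

lemma dir_norm: assumes k: "k > 0"
  shows "\<exists>m0. 0 \<le> m0 \<and> m0 < int k \<and> ((\<forall>x. prj k m0 x = prj k m x) \<or> (\<forall>x. prj k m0 x = - prj k m x))"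
proof -
  define r where "r = m mod (2 * int k)"
  define q where "q = m div (2 * int k)"
  have r: "0 \<le> r" "r < 2 * int k" unfolding r_def using k by auto
  have mr: "m = r + 2 * int k * q" unfolding r_def q_def by simp
  have pr: "prj k m x = prj k r x" for x unfolding mr using prj_mper[OF k] by simp
  show ?thesis
  proof (cases "r < int k")
    case True then show ?thesis using r pr by (intro exI[of _ r]) auto
  next
    case False
    have "prj k r x = - prj k (r - int k) x" for x using prj_mflip[OF k, of "r - int k" x] by simp
    then show ?thesis using r pr False by (intro exI[of _ "r - int k"]) auto
  qed
qed

lemma dm_eq: assumes k: "k > 0" "u \<in> Sk k"
  shows "\<forall>ps. is_path (Sk k) (star k) ps u u \<longrightarrow> monotone_path (dir k 0) ps"
proof (intro allI impI)
  fix ps assume "is_path (Sk k) (star k) ps u u"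
  then have "ps = [u]" using star_path[OF k(1)] by blast
  then show "monotone_path (dir k 0) ps" unfolding monotone_path_def by simp
qed

lemma dm_o: assumes k: "k > 0" and hk: "int k = 2*h" and uv: "u \<noteq> v"
  and x: "(u = (0,0) \<and> v = V k x) \<or> (v = (0,0) \<and> u = V k x)"
  shows "\<forall>ps. is_path (Sk k) (star k) ps u v \<longrightarrow> monotone_path (dir k 0) ps"
proof (intro allI impI)
  have nz: "prj k 0 x \<noteq> 0" using prj_nz[OF k hk] .
  have iuv: "inner u (dir k 0) \<noteq> inner v (dir k 0)"
  proof (cases "u = (0,0)")
    case True then have "v = V k x" using x uv by auto
    then show ?thesis using True nz inner_V[OF k] inner_o by simp
  next
    case uo: False then have "u = V k x" "v = (0,0)" using x by auto
    then show ?thesis using nz inner_V[OF k] inner_o by simp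
  qed
  fix ps assume p: "is_path (Sk k) (star k) ps u v"
  have ps: "ps = [u,v]" using star_path[OF k p] uv x V_neq_o[OF k] by auto
  show "monotone_path (dir k 0) ps" using iuv unfolding monotone_path_def ps by (simp add: neq_iff)
qed

lemma dm_gen: assumes k: "k > 0" and hk: "int k = 2*h" and xy: "(y - x) mod (2 * int k) \<noteq> 0"
  shows "\<exists>d\<in>dirs k. \<forall>ps. is_path (Sk k) (star k) ps (V k x) (V k y) \<longrightarrow> monotone_path d ps"
proof -
  obtain m where m: "0 < prj k m x" "prj k m y < 0" using prj_sep[OF k hk xy] by blast
  obtain m0 where m0: "0 \<le> m0" "m0 < int k" "(\<forall>z. prj k m0 z = prj k m z) \<or> (\<forall>z. prj k m0 z = - prj k m z)"
    using dir_norm[OF k] by blast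
  have dm0: "dir k m0 \<in> dirs k" unfolding dirs_iff using m0 by auto
  have ne: "V k x \<noteq> V k y"
  proof
    assume "V k x = V k y"
    then have "prj k m x = prj k m y" using inner_V[OF k, of x m] inner_V[OF k, of y m] by simp
    then show False using m by simp
  qed
  have iu: "inner (V k x) (dir k m0) = prj k m0 x" and iv: "inner (V k y) (dir k m0) = prj k m0 y"
    using inner_V[OF k] by auto
  have io: "inner ((0::real),(0::real)) (dir k m0) = 0" using inner_o .
  have "\<forall>ps. is_path (Sk k) (star k) ps (V k x) (V k y) \<longrightarrow> monotone_path (dir k m0) ps"
  proof (intro allI impI)
    fix ps assume p: "is_path (Sk k) (star k) ps (V k x) (V k y)"
    have ps: "ps = [V k x, (0,0), V k y]" using star_path[OF k p] ne V_neq_o[OF k] by auto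
    from m0(3) show "monotone_path (dir k m0) ps"
    proof
      assume "\<forall>z. prj k m0 z = prj k m z"
      then have "0 < prj k m0 x" "prj k m0 y < 0" using m by auto
      then show ?thesis unfolding monotone_path_def ps using iu iv io by simp
    next
      assume "\<forall>z. prj k m0 z = - prj k m z"
      then have "prj k m0 x < 0" "0 < prj k m0 y" using m by auto
      then show ?thesis unfolding monotone_path_def ps using iu iv io by simp
    qed
  qed
  then show ?thesis using dm0 by blast
qed

lemma star_dm: assumes k: "k > 0" "even k" shows "Dmonotone (dirs k) (Sk k) (star k)"
  unfolding Dmonotone_def
proof (intro ballI)
  define h where "h = int k div 2"
  have hk: "int k = 2*h" unfolding h_def using k(2) by auto
  fix u v assume u: "u \<in> Sk k" and v: "v \<in> Sk k"
  have d0: "dir k 0 \<in> dirs k" unfolding dirs_iff using k by auto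
  show "\<exists>d\<in>dirs k. \<forall>ps. is_path (Sk k) (star k) ps u v \<longrightarrow> monotone_path d ps"
  proof (cases "u = v")
    case True then show ?thesis using dm_eq[OF k(1) u] d0 by blast
  next
    case False
    show ?thesis
    proof (cases "u = (0,0)")
      case True
      then have "v \<noteq> (0,0)" using False by simp
      then obtain x where "v = V k x" using Sk_cases[OF v] by blast
      then show ?thesis using dm_o[OF k(1) hk False, of x] True d0 by blast
    next
      case uo: False
      obtain x where ux: "u = V k x" using Sk_cases[OF u] uo by blast
      show ?thesis
      proof (cases "v = (0,0)")
        case True
        then show ?thesis using dm_o[OF k(1) hk False, of x] ux d0 by blast
      next
        case vo: False
        obtain y where vy: "v = V k y" using Sk_cases[OF v] vo by blast
        have "(y - x) mod (2 * int k) \<noteq> 0"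
        proof
          assume "(y - x) mod (2 * int k) = 0"
          then have "V k y = V k x" using V_eq_iff[OF k(1) hk] by simp
          then show False using False ux vy by simp
        qed
        then show ?thesis using dm_gen[OF k(1) hk] ux vy by blast
      qed
    qed
  qed
qed

theorem theorem3:
  fixes k :: nat
  assumes "even k" and "k \<ge> 2"
  shows "spanning_tree (Sk k) (star k) \<and> Dmonotone (dirs k) (Sk k) (star k)
       \<and> (\<forall>E. spanning_tree (Sk k) E \<and> Dmonotone (dirs k) (Sk k) E \<and> E \<noteq> star k
              \<longrightarrow> tree_length (star k) < tree_length E)
       \<and> degree (star k) (0,0) = 2 * k"
proof (intro conjI allI impI)
  have k: "k > 0" using assms by simp
  show "spanning_tree (Sk k) (star k)" using star_span[OF k] .
  show "Dmonotone (dirs k) (Sk k) (star k)" using star_dm[OF k assms(1)] .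
  show "degree (star k) (0,0) = 2 * k" using degree_star[OF k assms(1)] .
  fix E assume E: "spanning_tree (Sk k) E \<and> Dmonotone (dirs k) (Sk k) E \<and> E \<noteq> star k"
  interpret MT k E using assms E by unfold_locales auto
  show "tree_length (star k) < tree_length E" using main_bound E tl_star[OF k assms(1)] by simp
qed



end
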